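(* Let $n\ge1$, $s\in(0,1)$, $p\in[1,\infty)$. Let $F:\mathbb{R}\times(\mathbb{R}^n\setminus\{0\})\to[0,\infty)$ satisfy: $F(t,x)=F(-t,x)=F(-t,-x)$; $F(t_1,x)\le F(t_2,x)$ whenever $|t_1|\le|t_2|$; and, for some $c_*,c^*>0$, $c_*\big(\frac{|t|^p}{|x|^{n+sp}}-\frac{1}{|x|^{n+sp-p}}\big)\le F(t,x)\le c^*\frac{|t|^p}{|x|^{n+sp}}$. Let $W:\mathbb{R}\to[0,\infty)$ with $W\in C^2([-1,1])$ and $W(\pm1)=0$. Let $u:\mathbb{R}^n\to\mathbb{R}$ with $|u|\le1$ be a minimizer of $\mathcal{E}(\cdot,B_{R+2})$ for every sufficiently large $R$. Then $\lim_{R\to\infty}R^{-n}\mathcal{E}(u,B_R)=0$; more precisely, for all large $R$, $$\mathcal{E}(u,B_R)\le\begin{cases}CR^{n-1}&\text{if } s\in(\frac1p,1),\\ CR^{n-1}\log R&\text{if } s=\frac1p,\\ CR^{n-sp}&\text{if } s\in(0,\frac1p),\end{cases}$$ where $C>0$ is a constant independent of $R$.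
   Context: $B_R$ is the open ball of radius $R$ centered at $0$ and $\mathcal{C}B_R=\mathbb{R}^n\setminus B_R$. $\mathcal{E}(u,B_R)=\iint_{\mathbb{R}^{2n}\setminus(\mathcal{C}B_R)^2}F(u(x)-u(y),x-y)\,dx\,dy+\int_{B_R}W(u)\,dx$. A measurable $u$ is a minimizer of $\mathcal{E}(\cdot,B_R)$ if $\mathcal{E}(u,B_R)<\infty$ and $\mathcal{E}(u,B_R)\le\mathcal{E}(v,B_R)$ for every measurable $v$ with $v=u$ a.e. in $\mathcal{C}B_R$. *)

theory Defs
  imports "HOL-Analysis.Analysis"
begin

text \<open>The energy E(u, B_R): nonlocal interaction over R^{2n} minus (C B_R)^2
  plus potential over B_R; both integrands are nonnegative, so we use
  nonnegative (ennreal-valued) Lebesgue integrals.\<close>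
definition energy ::
  "(real \<Rightarrow> real^'n \<Rightarrow> real) \<Rightarrow> (real \<Rightarrow> real) \<Rightarrow> (real^'n \<Rightarrow> real) \<Rightarrow> real \<Rightarrow> ennreal" where
  "energy F W u R =
     (\<integral>\<^sup>+ z. indicator (- ((- ball 0 R) \<times> (- ball 0 R))) z
                * ennreal (F (u (fst z) - u (snd z)) (fst z - snd z))
       \<partial>(lebesgue \<Otimes>\<^sub>M lebesgue))
   + (\<integral>\<^sup>+ x. indicator (ball 0 R) x * ennreal (W (u x)) \<partial>lebesgue)"

definition is_minimizer ::
  "(real \<Rightarrow> real^'n \<Rightarrow> real) \<Rightarrow> (real \<Rightarrow> real) \<Rightarrow> (real^'n \<Rightarrow> real) \<Rightarrow> real \<Rightarrow> bool" where
  "is_minimizer F W u R \<longleftrightarrow>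
     u \<in> borel_measurable lebesgue \<and> energy F W u R < \<infinity> \<and>
     (\<forall>v \<in> borel_measurable lebesgue.
        (AE x in lebesgue. x \<notin> ball 0 R \<longrightarrow> v x = u x) \<longrightarrow> energy F W u R \<le> energy F W v R)"

definition C2_on :: "real set \<Rightarrow> (real \<Rightarrow> real) \<Rightarrow> bool" where
  "C2_on S W \<longleftrightarrow> (\<exists>W1 W2.
     (\<forall>t\<in>S. (W has_real_derivative W1 t) (at t within S)) \<and>
     (\<forall>t\<in>S. (W1 has_real_derivative W2 t) (at t within S)) \<and>
     continuous_on S W2)"

end

theory Submission
  imports Defs "HOL-Analysis.Analysis"
begin


lemma sf_leb: "sigma_finite_measure (lebesgue :: 'a::euclidean_space measure)"
proof
  obtain A :: "'a set set" where A: "countable A" "A \<subseteq> sets lborel" "\<Union>A = space lborel" "\<forall>a\<in>A. emeasure lborel a \<noteq> \<infinity>"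
    using lborel.sigma_finite_countable by blast
  show "\<exists>A::'a set set. countable A \<and> A \<subseteq> sets lebesgue \<and> \<Union> A = space lebesgue \<and> (\<forall>a\<in>A. emeasure lebesgue a \<noteq> \<infinity>)"
    using A by (intro exI[of _ A]) auto
qed

interpretation leb: sigma_finite_measure "lebesgue :: 'a::euclidean_space measure" by (rule sf_leb)
interpretation leb_pair: pair_sigma_finite "lebesgue :: 'a::euclidean_space measure" "lebesgue :: 'b::euclidean_space measure" ..

lemma meas_pair_borel:
  fixes h :: "'a::euclidean_space \<times> 'b::euclidean_space \<Rightarrow> 'c::{second_countable_topology,topological_space}"
  assumes "h \<in> borel_measurable borel"
  shows "h \<in> borel_measurable (lebesgue \<Otimes>\<^sub>M lebesgue)"
proof -
  have "(\<lambda>z. z) \<in> (lebesgue \<Otimes>\<^sub>M lebesgue) \<rightarrow>\<^sub>M (borel :: ('a\<times>'b) measure)"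
  proof -
    have 1: "(\<lambda>x. x) \<in> (lebesgue::'a measure) \<rightarrow>\<^sub>M borel"
      by (rule measurable_completion) simp
    have 2: "(\<lambda>x. x) \<in> (lebesgue::'b measure) \<rightarrow>\<^sub>M borel"
      by (rule measurable_completion) simp
    have "(\<lambda>z. (fst z, snd z)) \<in> (lebesgue \<Otimes>\<^sub>M lebesgue) \<rightarrow>\<^sub>M (borel \<Otimes>\<^sub>M borel :: ('a\<times>'b) measure)"
      by (intro measurable_Pair measurable_compose[OF measurable_fst 1] measurable_compose[OF measurable_snd 2])
    then show ?thesis unfolding borel_prod by simp
  qed
  then show ?thesis using measurable_compose assms by blast
qed

lemma meas_leb_borel:
  fixes h :: "'a::euclidean_space \<Rightarrow> 'c::topological_space"
  assumes "h \<in> borel_measurable borel"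
  shows "h \<in> borel_measurable lebesgue"
proof -
  have "h \<in> lborel \<rightarrow>\<^sub>M borel" using assms by simp
  then show ?thesis by (rule measurable_completion)
qed

lemma ball_leb:
  fixes r :: real assumes "0 \<le> r"
  shows "emeasure lebesgue (ball (0::'a::euclidean_space) r) = ennreal (measure lborel (ball (0::'a) 1) * r ^ DIM('a))"
proof -
  have "emeasure lebesgue (ball (0::'a) r) = ennreal (r ^ DIM('a)) * emeasure lebesgue (ball (0 :: 'a) 1)"
    using assms by (rule emeasure_lebesgue_ball_conv_unit_ball)
  also have "emeasure lebesgue (ball (0 :: 'a) 1) = ennreal (measure lborel (ball (0::'a) 1))"
    using emeasure_lborel_ball_finite[of "0::'a" 1] by (subst emeasure_eq_ennreal_measure) auto
  finally show ?thesis using assms by (simp add: ennreal_mult'[symmetric] mult.commute)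
qed

lemma ball_lborel:
  fixes r :: real assumes "0 \<le> r"
  shows "emeasure lborel (ball (0::'a::euclidean_space) r) = ennreal (measure lborel (ball (0::'a) 1) * r ^ DIM('a))"
  using ball_leb[OF assms] by simp

lemma omega_pos: "0 < measure lborel (ball (0::'a::euclidean_space) 1)"
  by (simp add: content_ball_pos)

lemma nn_int_translate1:
  fixes f :: "'a::euclidean_space \<Rightarrow> ennreal"
  assumes f: "f \<in> borel_measurable borel"
  shows "(\<integral>\<^sup>+y. f (x - y) \<partial>lborel) = (\<integral>\<^sup>+z. f z \<partial>lborel)"
proof -
  have eq: "(lborel::'a measure) = distr lborel borel (\<lambda>y. x - y)"
    using lborel_affine[of "-1::real" x] by (simp add: density_1)
  have "(\<integral>\<^sup>+z. f z \<partial>(distr lborel borel (\<lambda>y. x - y))) = (\<integral>\<^sup>+y. f (x - y) \<partial>lborel)"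
    using f by (subst nn_integral_distr) auto
  then show ?thesis using eq by simp
qed

lemma nn_int_translate2:
  fixes f :: "'a::euclidean_space \<Rightarrow> ennreal"
  assumes f: "f \<in> borel_measurable borel"
  shows "(\<integral>\<^sup>+x. f (x - y) \<partial>lborel) = (\<integral>\<^sup>+z. f z \<partial>lborel)"
proof -
  have eq: "(lborel::'a measure) = distr lborel borel ((+) (-y))"
    using lborel_distr_plus[of "-y"] by simp
  have "(\<integral>\<^sup>+z. f z \<partial>(distr lborel borel ((+) (-y)))) = (\<integral>\<^sup>+x. f (x - y) \<partial>lborel)"
    using f by (subst nn_integral_distr) (auto simp: add.commute)
  then show ?thesis using eq by simp
qed

lemma shell_pt:
  fixes r t b :: real assumes "0 < r" "r \<le> t" "t < 2*r"
  shows "t powr b \<le> (1 + 2 powr b) * r powr b"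
proof -
  have 0: "0 \<le> r powr b" "0 \<le> 2 powr b * r powr b" by simp_all
  show ?thesis
  proof (cases "b \<ge> 0")
    case True
    have "t powr b \<le> (2*r) powr b" using assms True by (intro powr_mono2) auto
    also have "\<dots> = 2 powr b * r powr b" using assms by (simp add: powr_mult)
    finally show ?thesis by (simp add: distrib_right add_increasing)
  next
    case False
    have "t powr b \<le> r powr b" using assms False by (intro powr_mono2') auto
    then show ?thesis by (simp add: distrib_right add_increasing2)
  qed
qed

lemma shell_int:
  fixes r b :: real assumes r: "0 < r"
  shows "(\<integral>\<^sup>+z. indicator {z::'a::euclidean_space. r \<le> norm z \<and> norm z < 2*r} z * ennreal (norm z powr b) \<partial>lborel)
     \<le> ennreal ((1 + 2 powr b) * measure lborel (ball (0::'a) 1) * 2 ^ DIM('a) * r powr (b + DIM('a)))"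
proof -
  have "(\<integral>\<^sup>+z. indicator {z::'a. r \<le> norm z \<and> norm z < 2*r} z * ennreal (norm z powr b) \<partial>lborel)
     \<le> (\<integral>\<^sup>+z. ennreal ((1 + 2 powr b) * r powr b) * indicator (ball (0::'a) (2*r)) z \<partial>lborel)"
  proof (rule nn_integral_mono)
    fix z :: 'a
    show "indicator {z::'a. r \<le> norm z \<and> norm z < 2*r} z * ennreal (norm z powr b) \<le> ennreal ((1 + 2 powr b) * r powr b) * indicator (ball (0::'a) (2*r)) z"
    proof (cases "r \<le> norm z \<and> norm z < 2*r")
      case True then show ?thesis using r by (auto simp: indicator_def intro!: ennreal_leI shell_pt)
    qed auto
  qed
  also have "\<dots> = ennreal ((1 + 2 powr b) * r powr b) * emeasure lborel (ball (0::'a) (2*r))"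
    by (simp add: nn_integral_cmult_indicator)
  also have "\<dots> = ennreal ((1 + 2 powr b) * r powr b * (measure lborel (ball (0::'a) 1) * (2*r) ^ DIM('a)))"
    using r by (simp add: ball_lborel ennreal_mult'[symmetric] add_pos_nonneg)
  also have "(1 + 2 powr b) * r powr b * (measure lborel (ball (0::'a) 1) * (2*r) ^ DIM('a)) =
        (1 + 2 powr b) * measure lborel (ball (0::'a) 1) * 2 ^ DIM('a) * r powr (b + DIM('a))"
    using r by (simp add: powr_add powr_realpow power_mult_distrib)
  finally show ?thesis .
qed



lemma ennreal_le_suminf: "(f::nat \<Rightarrow> ennreal) k \<le> suminf f"
  using sum_le_suminf[of f "{k}"] by (simp add: summableI)

lemma dyadic:
  fixes d q b :: real and S :: "'a::euclidean_space set"
  assumes d: "0 < d" and q: "0 < q" and Q: "q powr (b + DIM('a)) < 1"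
    and cover: "\<And>z. z \<in> S \<Longrightarrow> \<exists>k::nat. d*q^k \<le> norm z \<and> norm z < 2*(d*q^k)"
  shows "(\<integral>\<^sup>+z. indicator S z * ennreal (norm z powr b) \<partial>lborel)
     \<le> ennreal ((1 + 2 powr b) * measure lborel (ball (0::'a) 1) * 2 ^ DIM('a) * d powr (b + DIM('a)) / (1 - q powr (b + DIM('a))))"
proof -
  define e where "e = b + DIM('a)"
  define C where "C = (1 + 2 powr b) * measure lborel (ball (0::'a) 1) * 2 ^ DIM('a)"
  define sh where "sh k = {z::'a. d*q^k \<le> norm z \<and> norm z < 2*(d*q^k)}" for k :: nat
  have C0: "0 \<le> C" unfolding C_def by (simp add: add_nonneg_nonneg)
  have "(\<integral>\<^sup>+z. indicator S z * ennreal (norm z powr b) \<partial>lborel)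
     \<le> (\<integral>\<^sup>+z. (\<Sum>k. indicator (sh k) z * ennreal (norm z powr b)) \<partial>lborel)"
  proof (rule nn_integral_mono)
    fix z :: 'a
    show "indicator S z * ennreal (norm z powr b) \<le> (\<Sum>k. indicator (sh k) z * ennreal (norm z powr b))"
    proof (cases "z \<in> S")
      case True
      then obtain k where k: "z \<in> sh k" using cover unfolding sh_def by blast
      have "indicator S z * ennreal (norm z powr b) = indicator (sh k) z * ennreal (norm z powr b)"
        using k True by simp
      also have "\<dots> \<le> (\<Sum>k. indicator (sh k) z * ennreal (norm z powr b))"
        by (rule ennreal_le_suminf)
      finally show ?thesis .
    qed simp
  qed
  also have "\<dots> = (\<Sum>k. \<integral>\<^sup>+z. indicator (sh k) z * ennreal (norm z powr b) \<partial>lborel)"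
    by (rule nn_integral_suminf) (auto simp: sh_def)
  also have "\<dots> \<le> (\<Sum>k. ennreal (C * d powr e * (q powr e) ^ k))"
  proof (rule suminf_le)
    fix k :: nat
    have "(\<integral>\<^sup>+z. indicator (sh k) z * ennreal (norm z powr b) \<partial>lborel) \<le> ennreal (C * (d*q^k) powr e)"
      unfolding sh_def C_def e_def using d q by (intro shell_int) simp
    also have "(d*q^k) powr e = d powr e * (q powr e) ^ k"
      using d q by (simp add: powr_mult powr_power powr_realpow[symmetric] powr_powr mult.commute)
    finally show "(\<integral>\<^sup>+z. indicator (sh k) z * ennreal (norm z powr b) \<partial>lborel) \<le> ennreal (C * d powr e * (q powr e) ^ k)"
      by (simp add: mult.assoc)
  qed (simp_all add: summableI)
  also have "(\<Sum>k. ennreal (C * d powr e * (q powr e) ^ k)) = ennreal (C * d powr e * (1 / (1 - q powr e)))"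
  proof (rule suminf_ennreal_eq)
    show "(\<lambda>k. C * d powr e * (q powr e) ^ k) sums (C * d powr e * (1 / (1 - q powr e)))"
      using Q unfolding e_def by (intro sums_mult geometric_sums) simp
  qed (use C0 in simp)
  finally show ?thesis unfolding C_def e_def by simp
qed



lemma dy_ex1: "1 \<le> (x::real) \<Longrightarrow> x < 2^n \<Longrightarrow> \<exists>k::nat. 2^k \<le> x \<and> x < 2^(Suc k)"
proof (induction n)
  case 0 then show ?case by simp
next
  case (Suc n)
  show ?case
  proof (cases "x < 2^n")
    case True then show ?thesis using Suc by blast
  next
    case False then show ?thesis using Suc by (intro exI[of _ n]) simp
  qed
qed

lemma dy_ex2: "1 < (x::real) \<Longrightarrow> x \<le> 2^n \<Longrightarrow> \<exists>k::nat. 2^k < x \<and> x \<le> 2^(Suc k)"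
proof (induction n)
  case 0 then show ?case by simp
next
  case (Suc n)
  show ?case
  proof (cases "x \<le> 2^n")
    case True then show ?thesis using Suc by blast
  next
    case False then show ?thesis using Suc by (intro exI[of _ n]) simp
  qed
qed

lemma tail_int:
  fixes a :: real
  assumes a: "real DIM('a::euclidean_space) < a"
  shows "\<exists>Ct\<ge>0. \<forall>d>0. (\<integral>\<^sup>+z. indicator {z::'a. d \<le> norm z} z * ennreal (norm z powr (-a)) \<partial>lborel)
           \<le> ennreal (Ct * d powr (DIM('a) - a))"
proof -
  define Ct where "Ct = (1 + 2 powr (-a)) * measure lborel (ball (0::'a) 1) * 2 ^ DIM('a) / (1 - 2 powr (-a + DIM('a)))"
  have lt: "2 powr (-a + DIM('a)) < (1::real)" using a by (simp add: powr_less_one)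
  have "0 \<le> Ct" unfolding Ct_def using lt by (intro divide_nonneg_pos) (auto simp: add_nonneg_nonneg)
  moreover have "(\<integral>\<^sup>+z. indicator {z::'a. d \<le> norm z} z * ennreal (norm z powr (-a)) \<partial>lborel)
           \<le> ennreal (Ct * d powr (DIM('a) - a))" if d: "0 < d" for d
  proof -
    have "(\<integral>\<^sup>+z. indicator {z::'a. d \<le> norm z} z * ennreal (norm z powr (-a)) \<partial>lborel)
      \<le> ennreal ((1 + 2 powr (-a)) * measure lborel (ball (0::'a) 1) * 2 ^ DIM('a) * d powr (-a + DIM('a)) / (1 - 2 powr (-a + DIM('a))))"
    proof (rule dyadic)
      fix z :: 'a assume "z \<in> {z. d \<le> norm z}"
      then have z: "1 \<le> norm z / d" using d by simp
      obtain n where "norm z / d < 2^n" using real_arch_pow[of 2 "norm z / d"] by auto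
      then obtain k where "2^k \<le> norm z / d \<and> norm z / d < 2^(Suc k)" using dy_ex1[OF z] by blast
      then show "\<exists>k. d * 2 ^ k \<le> norm z \<and> norm z < 2 * (d * 2 ^ k)"
        using d by (intro exI[of _ k]) (simp add: field_simps)
    qed (use d lt in auto)
    also have "\<dots> = ennreal (Ct * d powr (DIM('a) - a))" unfolding Ct_def by (simp add: field_simps)
    finally show ?thesis .
  qed
  ultimately show ?thesis by blast
qed

lemma near_int:
  fixes b :: real
  assumes b: "0 < b + DIM('a::euclidean_space)"
  shows "\<exists>K\<ge>0. (\<integral>\<^sup>+z. indicator {z::'a. z \<noteq> 0 \<and> norm z < 1} z * ennreal (norm z powr b) \<partial>lborel) \<le> ennreal K"
proof -
  have lt: "(1/2) powr (b + DIM('a)) < (1::real)" using b powr_less_mono2[of "b + DIM('a)" "1/2" 1] by simp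
  have "(\<integral>\<^sup>+z. indicator {z::'a. z \<noteq> 0 \<and> norm z < 1} z * ennreal (norm z powr b) \<partial>lborel)
      \<le> ennreal ((1 + 2 powr b) * measure lborel (ball (0::'a) 1) * 2 ^ DIM('a) * (1/2) powr (b + DIM('a)) / (1 - (1/2) powr (b + DIM('a))))"
  proof (rule dyadic)
    fix z :: 'a assume "z \<in> {z. z \<noteq> 0 \<and> norm z < 1}"
    then have z: "1 < 1 / norm z" and zp: "0 < norm z" by simp_all
    obtain n where "1 / norm z < 2^n" using real_arch_pow[of 2 "1 / norm z"] by auto
    then obtain k where k: "2^k < 1 / norm z \<and> 1 / norm z \<le> 2^(Suc k)" using dy_ex2[OF z, of n] by (meson less_imp_le)
    have "(1/2) * (1/2)^k \<le> norm z \<and> norm z < 2 * ((1/2) * (1/2)^k)"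
      using k zp by (simp add: field_simps power_one_over)
    then show "\<exists>k. 1 / 2 * (1 / 2) ^ k \<le> norm z \<and> norm z < 2 * (1 / 2 * (1 / 2) ^ k)" by blast
  qed (use lt in auto)
  moreover have "0 \<le> (1 + 2 powr b) * measure lborel (ball (0::'a) 1) * 2 ^ DIM('a) * (1/2) powr (b + DIM('a)) / (1 - (1/2) powr (b + DIM('a)))"
    using lt by (intro divide_nonneg_pos) (auto simp: add_nonneg_nonneg)
  ultimately show ?thesis by blast
qed

lemma kappa_int:
  fixes p a :: real
  assumes p: "0 < p" and a1: "real DIM('a::euclidean_space) < a" and a2: "a < DIM('a) + p"
  shows "\<exists>K\<ge>0. (\<integral>\<^sup>+z. ennreal (min 1 (norm (z::'a)) powr p / norm z powr a) \<partial>lborel) \<le> ennreal K"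
proof -
  obtain K1 where K1: "K1 \<ge> 0" "(\<integral>\<^sup>+z. indicator {z::'a. z \<noteq> 0 \<and> norm z < 1} z * ennreal (norm z powr (p - a)) \<partial>lborel) \<le> ennreal K1"
    using near_int[of "p - a", where 'a='a] a2 by auto
  obtain Ct where Ct: "Ct \<ge> 0" "\<forall>d>0. (\<integral>\<^sup>+z. indicator {z::'a. d \<le> norm z} z * ennreal (norm z powr (-a)) \<partial>lborel)
           \<le> ennreal (Ct * d powr (DIM('a) - a))"
    using tail_int[OF a1] by auto
  have T: "(\<integral>\<^sup>+z. indicator {z::'a. 1 \<le> norm z} z * ennreal (norm z powr (-a)) \<partial>lborel) \<le> ennreal Ct"
    using Ct(2)[rule_format, of 1] by simp
  have "(\<integral>\<^sup>+z. ennreal (min 1 (norm (z::'a)) powr p / norm z powr a) \<partial>lborel) \<le>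
     (\<integral>\<^sup>+z. indicator {z::'a. z \<noteq> 0 \<and> norm z < 1} z * ennreal (norm z powr (p - a)) + indicator {z::'a. 1 \<le> norm z} z * ennreal (norm z powr (-a)) \<partial>lborel)"
  proof (rule nn_integral_mono)
    fix z :: 'a
    show "ennreal (min 1 (norm (z::'a)) powr p / norm z powr a) \<le> indicator {z::'a. z \<noteq> 0 \<and> norm z < 1} z * ennreal (norm z powr (p - a)) + indicator {z::'a. 1 \<le> norm z} z * ennreal (norm z powr (-a))"
    proof (cases "z = 0")
      case True then show ?thesis using p by simp
    next
      case False
      show ?thesis
      proof (cases "norm z < 1")
        case True
        then have "min 1 (norm z) powr p / norm z powr a = norm z powr (p - a)"
          using False by (simp add: powr_diff)
        then show ?thesis using True False by simp
      next
        case nt: False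
        then have "min 1 (norm z) powr p / norm z powr a = norm z powr (-a)"
          by (simp add: powr_minus_divide)
        then show ?thesis using nt by simp
      qed
    qed
  qed
  also have "\<dots> = (\<integral>\<^sup>+z. indicator {z::'a. z \<noteq> 0 \<and> norm z < 1} z * ennreal (norm z powr (p - a)) \<partial>lborel) + (\<integral>\<^sup>+z. indicator {z::'a. 1 \<le> norm z} z * ennreal (norm z powr (-a)) \<partial>lborel)"
    by (rule nn_integral_add) auto
  also have "\<dots> \<le> ennreal K1 + ennreal Ct" using K1 T by (intro add_mono) auto
  also have "\<dots> = ennreal (K1 + Ct)" using K1 Ct by simp
  finally show ?thesis using K1 Ct by (intro exI[of _ "K1 + Ct"]) auto
qed



lemma mvt_pow:
  fixes x \<sigma> :: real assumes x: "0 < x" and sg: "0 \<le> \<sigma>"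
  shows "\<exists>\<xi>. (x+1) powr (-\<sigma>) \<le> \<xi> \<and> (x+1) powr (1-\<sigma>) - x powr (1-\<sigma>) = (1-\<sigma>) * \<xi>"
proof -
  have "\<And>t. x \<le> t \<Longrightarrow> t \<le> x+1 \<Longrightarrow> ((\<lambda>t. t powr (1-\<sigma>)) has_real_derivative (1-\<sigma>) * t powr (1-\<sigma>-1)) (at t)"
  proof -
    fix t assume "x \<le> t" "t \<le> x+1"
    then have "0 < t" using x by linarith
    then show "((\<lambda>t. t powr (1-\<sigma>)) has_real_derivative (1-\<sigma>) * t powr (1-\<sigma>-1)) (at t)"
      by (rule has_real_derivative_powr)
  qed
  from MVT2[of x "x+1", OF _ this] obtain z where z: "x < z" "z < x+1"
    "(x+1) powr (1-\<sigma>) - x powr (1-\<sigma>) = (x + 1 - x) * ((1-\<sigma>) * z powr (1-\<sigma>-1))" by auto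
  have "(x+1) powr (-\<sigma>) \<le> z powr (-\<sigma>)" using z x sg by (intro powr_mono2') auto
  then show ?thesis using z by (intro exI[of _ "z powr (-\<sigma>)"]) auto
qed

lemma harm_gt1:
  fixes \<sigma> :: real assumes sg: "1 < \<sigma>"
  shows "(\<Sum>j=1..J. real j powr (-\<sigma>)) \<le> \<sigma> / (\<sigma> - 1)"
proof -
  have "J \<ge> 1 \<Longrightarrow> (\<Sum>j=1..J. real j powr (-\<sigma>)) \<le> \<sigma> / (\<sigma> - 1) - real J powr (1-\<sigma>) / (\<sigma> - 1)"
  proof (induction J rule: nat_induct_at_least)
    case base then show ?case using sg by (simp add: diff_divide_distrib[symmetric])
  next
    case (Suc n)
    obtain \<xi> where xi: "(real n+1) powr (-\<sigma>) \<le> \<xi>" "(real n+1) powr (1-\<sigma>) - real n powr (1-\<sigma>) = (1-\<sigma>) * \<xi>"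
      using mvt_pow[of "real n" \<sigma>] Suc sg by auto
    have "(\<Sum>j=1..Suc n. real j powr (-\<sigma>)) = (\<Sum>j=1..n. real j powr (-\<sigma>)) + (real n + 1) powr (-\<sigma>)"
      by (simp add: add.commute)
    also have "\<dots> \<le> \<sigma> / (\<sigma> - 1) - real n powr (1-\<sigma>) / (\<sigma> - 1) + (real n + 1) powr (-\<sigma>)"
      using Suc by simp
    also have "\<dots> \<le> \<sigma> / (\<sigma> - 1) - real (Suc n) powr (1-\<sigma>) / (\<sigma> - 1)"
    proof -
      have "(real n + 1) powr (-\<sigma>) * (\<sigma> - 1) \<le> \<xi> * (\<sigma> - 1)" using xi sg by (intro mult_right_mono) auto
      then have "(real n + 1) powr (-\<sigma>) \<le> (real n powr (1-\<sigma>) - (real n+1) powr (1-\<sigma>)) / (\<sigma> - 1)"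
        using xi sg by (simp add: field_simps)
      moreover have "(real n powr (1-\<sigma>) - (real n+1) powr (1-\<sigma>)) / (\<sigma> - 1) = real n powr (1-\<sigma>) / (\<sigma> - 1) - (real n+1) powr (1-\<sigma>) / (\<sigma> - 1)"
        by (simp add: diff_divide_distrib)
      ultimately show ?thesis by (simp add: add.commute)
    qed
    finally show ?case .
  qed
  moreover have "0 \<le> real J powr (1-\<sigma>) / (\<sigma> - 1)" using sg by simp
  ultimately show ?thesis using sg by (cases "J = 0") (auto intro: order_trans)
qed

lemma harm_lt1:
  fixes \<sigma> :: real assumes sg: "0 \<le> \<sigma>" "\<sigma> < 1"
  shows "(\<Sum>j=1..J. real j powr (-\<sigma>)) \<le> real J powr (1-\<sigma>) / (1 - \<sigma>)"
proof (cases "J \<ge> 1")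
  case True
  then show ?thesis
  proof (induction J rule: nat_induct_at_least)
    case base then show ?case using sg by (simp add: field_simps)
  next
    case (Suc n)
    obtain \<xi> where xi: "(real n+1) powr (-\<sigma>) \<le> \<xi>" "(real n+1) powr (1-\<sigma>) - real n powr (1-\<sigma>) = (1-\<sigma>) * \<xi>"
      using mvt_pow[of "real n" \<sigma>] Suc sg by auto
    have "(\<Sum>j=1..Suc n. real j powr (-\<sigma>)) = (\<Sum>j=1..n. real j powr (-\<sigma>)) + (real n + 1) powr (-\<sigma>)"
      by (simp add: add.commute)
    also have "\<dots> \<le> real n powr (1-\<sigma>) / (1 - \<sigma>) + (real n + 1) powr (-\<sigma>)"
      using Suc by simp
    also have "\<dots> \<le> real (Suc n) powr (1-\<sigma>) / (1 - \<sigma>)"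
    proof -
      have "(real n + 1) powr (-\<sigma>) * (1 - \<sigma>) \<le> \<xi> * (1 - \<sigma>)" using xi sg by (intro mult_right_mono) auto
      then have "(real n + 1) powr (-\<sigma>) \<le> ((real n+1) powr (1-\<sigma>) - real n powr (1-\<sigma>)) / (1 - \<sigma>)"
        using xi sg by (simp add: field_simps)
      moreover have "((real n+1) powr (1-\<sigma>) - real n powr (1-\<sigma>)) / (1 - \<sigma>) = (real n+1) powr (1-\<sigma>) / (1 - \<sigma>) - real n powr (1-\<sigma>) / (1 - \<sigma>)"
        by (simp add: diff_divide_distrib)
      ultimately show ?thesis by (simp add: add.commute)
    qed
    finally show ?case .
  qed
qed (use sg in simp)

lemma harm_eq1:
  "J \<ge> 1 \<Longrightarrow> (\<Sum>j=1..J. real j powr (-1)) \<le> 1 + ln (real J)"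
proof (induction J rule: nat_induct_at_least)
  case base then show ?case by simp
next
  case (Suc n)
  have "ln (real n / (real n + 1)) \<le> real n / (real n + 1) - 1"
    using Suc by (intro ln_le_minus_one) auto
  moreover have "ln (real n / (real n + 1)) = ln (real n) - ln (real n + 1)"
    using Suc by (intro ln_divide_pos) auto
  moreover have "real n / (real n + 1) - 1 = - 1 / (real n + 1)" by (simp add: field_simps)
  ultimately have "1 / (real n + 1) \<le> ln (real n + 1) - ln (real n)" by linarith
  moreover have "(\<Sum>j=1..Suc n. real j powr (-1)) = (\<Sum>j=1..n. real j powr (-1)) + 1 / (real n + 1)"
    by (simp add: add.commute powr_minus_divide)
  ultimately show ?case using Suc by (simp add: add.commute)
qed



lemma pow_diff:
  fixes a b :: real assumes "0 \<le> a" "a \<le> b" "b - a \<le> 1"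
  shows "b^n - a^n \<le> real n * b^(n-1)"
proof (induction n)
  case 0 then show ?case by simp
next
  case (Suc n)
  have e: "b^Suc n - a^Suc n = b*(b^n - a^n) + a^n*(b-a)" by (simp add: algebra_simps)
  have "b*(b^n - a^n) \<le> b * (real n * b^(n-1))" using Suc assms by (intro mult_left_mono) auto
  also have "\<dots> = real n * b^n" by (cases n) auto
  finally have 1: "b*(b^n - a^n) \<le> real n * b^n" .
  have "a^n*(b-a) \<le> b^n * 1" using assms by (intro mult_mono power_mono) auto
  with 1 e show ?case by (simp add: algebra_simps)
qed

lemma annulus_meas:
  fixes r1 r2 :: real assumes "0 \<le> r1" "r1 \<le> r2" "r2 - r1 \<le> 1"
  shows "emeasure lborel (ball (0::'a::euclidean_space) r2 - ball 0 r1)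
     \<le> ennreal (measure lborel (ball (0::'a) 1) * DIM('a) * r2 ^ (DIM('a) - 1))"
proof -
  have sub: "ball (0::'a) r1 \<subseteq> ball 0 r2" using assms by auto
  have "emeasure lborel (ball (0::'a) r2 - ball 0 r1) = emeasure lborel (ball (0::'a) r2) - emeasure lborel (ball (0::'a) r1)"
    using sub emeasure_lborel_ball_finite[of "0::'a" r1] by (intro emeasure_Diff) auto
  also have "\<dots> = ennreal (measure lborel (ball (0::'a) 1) * (r2 ^ DIM('a) - r1 ^ DIM('a)))"
    using assms by (simp add: ball_lborel ennreal_minus right_diff_distrib)
  also have "\<dots> \<le> ennreal (measure lborel (ball (0::'a) 1) * (DIM('a) * r2 ^ (DIM('a) - 1)))"
    using assms pow_diff[of r1 r2 "DIM('a)"] by (intro ennreal_leI mult_left_mono) auto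
  finally show ?thesis by (simp add: mult.assoc)
qed

lemma layer_int:
  fixes \<rho> \<sigma> :: real assumes \<rho>: "1 \<le> \<rho>" and \<sigma>: "0 < \<sigma>"
  shows "(\<integral>\<^sup>+x. indicator (ball (0::'a::euclidean_space) \<rho>) x * ennreal ((\<rho> + 1 - norm x) powr (-\<sigma>)) \<partial>lborel)
    \<le> ennreal (measure lborel (ball (0::'a) 1) * DIM('a) * \<rho> ^ (DIM('a) - 1) * (\<Sum>j=1..nat \<lceil>\<rho>\<rceil>. real j powr (-\<sigma>)))"
proof -
  define J where "J = nat \<lceil>\<rho>\<rceil>"
  define S where "S j = ball (0::'a) (\<rho> + 1 - real j) - ball 0 (max 0 (\<rho> - real j))" for j :: nat
  define M where "M = measure lborel (ball (0::'a) 1) * DIM('a) * \<rho> ^ (DIM('a) - 1)"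
  have M0: "0 \<le> M" unfolding M_def using \<rho> by simp
  have "(\<integral>\<^sup>+x. indicator (ball (0::'a) \<rho>) x * ennreal ((\<rho> + 1 - norm x) powr (-\<sigma>)) \<partial>lborel)
     \<le> (\<integral>\<^sup>+x. (\<Sum>j\<in>{1..J}. ennreal (real j powr (-\<sigma>)) * indicator (S j) x) \<partial>lborel)"
  proof (rule nn_integral_mono)
    fix x :: 'a
    show "indicator (ball (0::'a) \<rho>) x * ennreal ((\<rho> + 1 - norm x) powr (-\<sigma>)) \<le> (\<Sum>j\<in>{1..J}. ennreal (real j powr (-\<sigma>)) * indicator (S j) x)"
    proof (cases "norm x < \<rho>")
      case True
      define t where "t = \<rho> + 1 - norm x"
      have t1: "1 < t" using True unfolding t_def by simp
      define j where "j = nat (\<lceil>t\<rceil> - 1)"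
      have c2: "2 \<le> \<lceil>t\<rceil>" using t1 by (simp add: le_ceiling_iff)
      have cj: "real j = of_int \<lceil>t\<rceil> - 1" unfolding j_def using c2 by (subst of_nat_nat) auto
      have j1: "1 \<le> j" using t1 unfolding j_def by linarith
      have jt: "real j < t" "t \<le> real j + 1" using cj by linarith+
      have "\<lceil>t\<rceil> \<le> \<lceil>\<rho> + 1\<rceil>" unfolding t_def by (intro ceiling_mono) simp
      then have "\<lceil>t\<rceil> - 1 \<le> \<lceil>\<rho>\<rceil>" by simp
      then have jJ: "j \<le> J" unfolding j_def J_def by (intro nat_mono)
      have x1: "norm x < \<rho> + 1 - real j" "\<rho> - real j \<le> norm x" using jt unfolding t_def by linarith+
      have x2: "\<not> norm x < max 0 (\<rho> - real j)" using x1(2) norm_ge_zero[of x] by linarith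
      have xS: "x \<in> S j" unfolding S_def using x1(1) x2 by simp
      have "indicator (ball (0::'a) \<rho>) x * ennreal ((\<rho> + 1 - norm x) powr (-\<sigma>)) = ennreal (t powr (-\<sigma>))"
        using True unfolding t_def by simp
      also have "\<dots> \<le> ennreal (real j powr (-\<sigma>)) * indicator (S j) x"
      proof -
        have "t powr (-\<sigma>) \<le> real j powr (-\<sigma>)" using jt j1 \<sigma> by (intro powr_mono2') auto
        then show ?thesis using xS by (simp add: ennreal_leI)
      qed
      also have "\<dots> \<le> (\<Sum>j\<in>{1..J}. ennreal (real j powr (-\<sigma>)) * indicator (S j) x)"
        using j1 jJ by (intro member_le_sum) auto
      finally show ?thesis .
    qed simp
  qed
  also have "\<dots> = (\<Sum>j\<in>{1..J}. \<integral>\<^sup>+x. ennreal (real j powr (-\<sigma>)) * indicator (S j) x \<partial>lborel)"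
  proof (rule nn_integral_sum)
    fix j :: nat
    have "S j \<in> sets borel" unfolding S_def by (intro sets.Diff) simp_all
    then show "(\<lambda>x. ennreal (real j powr (-\<sigma>)) * indicator (S j) x) \<in> borel_measurable lborel"
      by (intro borel_measurable_times_ennreal) auto
  qed
  also have "\<dots> = (\<Sum>j\<in>{1..J}. ennreal (real j powr (-\<sigma>)) * emeasure lborel (S j))"
  proof (rule sum.cong)
    fix j :: nat
    have "S j \<in> sets lborel" unfolding S_def by (intro sets.Diff) simp_all
    then show "(\<integral>\<^sup>+x. ennreal (real j powr (-\<sigma>)) * indicator (S j) x \<partial>lborel) = ennreal (real j powr (-\<sigma>)) * emeasure lborel (S j)"
      by (rule nn_integral_cmult_indicator)
  qed simp
  also have "\<dots> \<le> (\<Sum>j\<in>{1..J}. ennreal (real j powr (-\<sigma>)) * ennreal M)"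
  proof (rule sum_mono)
    fix j assume j: "j \<in> {1..J}"
    have "emeasure lborel (S j) \<le> ennreal M"
    proof (cases "\<rho> + 1 - real j \<le> 0")
      case True
      then have "S j = {}" unfolding S_def by auto
      then show ?thesis by simp
    next
      case False
      have a: "0 \<le> max 0 (\<rho> - real j)" "max 0 (\<rho> - real j) \<le> \<rho> + 1 - real j" "\<rho> + 1 - real j - max 0 (\<rho> - real j) \<le> 1"
        using False by linarith+
      have "emeasure lborel (S j) \<le> ennreal (measure lborel (ball (0::'a) 1) * DIM('a) * (\<rho> + 1 - real j) ^ (DIM('a) - 1))"
        unfolding S_def by (rule annulus_meas[OF a])
      also have "(\<rho> + 1 - real j) ^ (DIM('a) - 1) \<le> \<rho> ^ (DIM('a) - 1)"
        using False j by (intro power_mono) auto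
      then have "ennreal (measure lborel (ball (0::'a) 1) * DIM('a) * (\<rho> + 1 - real j) ^ (DIM('a) - 1)) \<le> ennreal M"
        unfolding M_def by (intro ennreal_leI mult_left_mono) auto
      finally show ?thesis .
    qed
    then show "ennreal (real j powr (-\<sigma>)) * emeasure lborel (S j) \<le> ennreal (real j powr (-\<sigma>)) * ennreal M"
      by (rule mult_left_mono) auto
  qed
  also have "\<dots> = ennreal (M * (\<Sum>j=1..J. real j powr (-\<sigma>)))"
    using M0 by (simp add: ennreal_mult'[symmetric] sum_distrib_left mult.commute)
  finally show ?thesis unfolding M_def J_def .
qed



definition pairs :: "real \<Rightarrow> ('a::real_normed_vector \<times> 'a) set" where
  "pairs R = - ((- ball 0 R) \<times> (- ball 0 R))"

definition IF :: "(real \<Rightarrow> 'a \<Rightarrow> real) \<Rightarrow> ('a::euclidean_space \<Rightarrow> real) \<Rightarrow> ('a \<times> 'a) set \<Rightarrow> ennreal" where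
  "IF F f S = (\<integral>\<^sup>+ z. indicator S z * ennreal (F (f (fst z) - f (snd z)) (fst z - snd z)) \<partial>(lebesgue \<Otimes>\<^sub>M lebesgue))"

definition IW :: "(real \<Rightarrow> real) \<Rightarrow> ('a::euclidean_space \<Rightarrow> real) \<Rightarrow> 'a set \<Rightarrow> ennreal" where
  "IW W f S = (\<integral>\<^sup>+ x. indicator S x * ennreal (W (f x)) \<partial>lebesgue)"

lemma energy_eq: "energy F W u R = IF F u (pairs R) + IW W u (ball 0 R)"
  unfolding energy_def IF_def IW_def pairs_def by simp

lemma pairs_sets: "pairs R \<in> sets (lebesgue \<Otimes>\<^sub>M lebesgue :: ('a::euclidean_space \<times> 'a) measure)"
proof -
  have "(- ball (0::'a) R) \<times> (- ball 0 R) \<in> sets (lebesgue \<Otimes>\<^sub>M lebesgue)"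
    by (intro pair_measureI) (auto simp: Compl_eq_Diff_UNIV)
  then have "space (lebesgue \<Otimes>\<^sub>M lebesgue) - (- ball (0::'a) R) \<times> (- ball 0 R) \<in> sets (lebesgue \<Otimes>\<^sub>M lebesgue)"
    by (rule sets.compl_sets)
  then show ?thesis unfolding pairs_def by (simp add: space_pair_measure Compl_eq_Diff_UNIV)
qed

lemma meas_F_comp:
  fixes F :: "real \<Rightarrow> 'a::euclidean_space \<Rightarrow> real" and f :: "'a \<Rightarrow> real"
  assumes F: "(\<lambda>z. F (fst z) (snd z)) \<in> borel_measurable borel" and f: "f \<in> borel_measurable lebesgue"
  shows "(\<lambda>z. F (f (fst z) - f (snd z)) (fst z - snd z)) \<in> borel_measurable (lebesgue \<Otimes>\<^sub>M lebesgue)"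
proof -
  have m1: "(\<lambda>z. f (fst z) - f (snd z)) \<in> borel_measurable (lebesgue \<Otimes>\<^sub>M lebesgue)"
    using f by measurable
  have "(\<lambda>z::'a\<times>'a. fst z - snd z) \<in> borel_measurable borel"
    by (intro borel_measurable_continuous_onI continuous_intros)
  then have m2: "(\<lambda>z::'a\<times>'a. fst z - snd z) \<in> borel_measurable (lebesgue \<Otimes>\<^sub>M lebesgue)"
    by (rule meas_pair_borel)
  have "(\<lambda>z. (f (fst z) - f (snd z), fst z - snd z)) \<in> (lebesgue \<Otimes>\<^sub>M lebesgue) \<rightarrow>\<^sub>M (borel \<Otimes>\<^sub>M borel)"
    using m1 m2 by (rule measurable_Pair)
  then have "(\<lambda>z. (f (fst z) - f (snd z), fst z - snd z)) \<in> (lebesgue \<Otimes>\<^sub>M lebesgue) \<rightarrow>\<^sub>M (borel :: (real \<times> 'a) measure)"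
    by (simp add: borel_prod)
  from measurable_compose[OF this F] show ?thesis by simp
qed



definition psi :: "real \<Rightarrow> 'a::real_normed_vector \<Rightarrow> real" where
  "psi R x = -1 + 2 * min 1 (max 0 (norm x - R - 1))"

lemma psi_cont: "continuous_on UNIV (psi R)"
  unfolding psi_def by (intro continuous_intros)

lemma psi_meas: "psi R \<in> borel_measurable (lebesgue :: 'a::euclidean_space measure)"
  by (intro meas_leb_borel borel_measurable_continuous_onI psi_cont)

lemma psi_in: "R \<ge> 0 \<Longrightarrow> norm x < R + 1 \<Longrightarrow> psi R x = -1"
  unfolding psi_def by simp

lemma psi_out: "norm x \<ge> R + 2 \<Longrightarrow> psi R x = 1"
  unfolding psi_def by simp

lemma psi_bnd: "-1 \<le> psi R x" "psi R x \<le> 1"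
  unfolding psi_def by auto

lemma abs_min_le: "\<bar>min (a::real) b - min c d\<bar> \<le> max \<bar>a - c\<bar> \<bar>b - d\<bar>"
  by (auto simp: min_def max_def abs_if)

lemma IF_split:
  fixes F :: "real \<Rightarrow> 'a::euclidean_space \<Rightarrow> real"
  assumes F: "(\<lambda>z. F (fst z) (snd z)) \<in> borel_measurable borel" and f: "f \<in> borel_measurable lebesgue"
    and S: "S \<in> sets (lebesgue \<Otimes>\<^sub>M lebesgue)" and T: "T \<in> sets (lebesgue \<Otimes>\<^sub>M lebesgue)" and ST: "S \<subseteq> T"
  shows "IF F f T = IF F f S + IF F f (T - S)"
proof -
  note m = meas_F_comp[OF F f]
  have "IF F f T = (\<integral>\<^sup>+ z. indicator S z * ennreal (F (f (fst z) - f (snd z)) (fst z - snd z))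
      + indicator (T - S) z * ennreal (F (f (fst z) - f (snd z)) (fst z - snd z)) \<partial>(lebesgue \<Otimes>\<^sub>M lebesgue))"
    unfolding IF_def using ST by (intro nn_integral_cong) (auto simp: indicator_def)
  also have "\<dots> = IF F f S + IF F f (T - S)"
    unfolding IF_def using S T m by (intro nn_integral_add) auto
  finally show ?thesis .
qed

lemma IW_split:
  fixes f :: "'a::euclidean_space \<Rightarrow> real"
  assumes W: "W \<in> borel_measurable borel" and f: "f \<in> borel_measurable lebesgue"
    and S: "S \<in> sets lebesgue" and T: "T \<in> sets lebesgue" and ST: "S \<subseteq> T"
  shows "IW W f T = IW W f S + IW W f (T - S)"
proof -
  have m: "(\<lambda>x. W (f x)) \<in> borel_measurable lebesgue" using W f by measurable
  have "IW W f T = (\<integral>\<^sup>+ x. indicator S x * ennreal (W (f x)) + indicator (T - S) x * ennreal (W (f x)) \<partial>lebesgue)"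
    unfolding IW_def using ST by (intro nn_integral_cong) (auto simp: indicator_def)
  also have "\<dots> = IW W f S + IW W f (T - S)"
    unfolding IW_def using S T m by (intro nn_integral_add) auto
  finally show ?thesis .
qed

lemma competitor:
  fixes F :: "real \<Rightarrow> real^'n \<Rightarrow> real" and W :: "real \<Rightarrow> real" and u :: "real^'n \<Rightarrow> real"
  assumes F_meas: "(\<lambda>z. F (fst z) (snd z)) \<in> borel_measurable borel"
    and F_mono: "\<And>t1 t2 x. x \<noteq> 0 \<Longrightarrow> \<bar>t1\<bar> \<le> \<bar>t2\<bar> \<Longrightarrow> F t1 x \<le> F t2 x"
    and W_meas: "W \<in> borel_measurable borel" and W1: "W (-1) = 0"
    and u_bdd: "\<And>x. \<bar>u x\<bar> \<le> 1"
    and R: "0 \<le> R" and mini: "is_minimizer F W u (R + 2)"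
  shows "energy F W u R \<le> IF F (psi R) (pairs (R+2)) + IW W (psi R) (ball (0::real^'n) (R+2))"
proof -
  have um: "u \<in> borel_measurable lebesgue" and fin: "energy F W u (R+2) < \<infinity>"
    and cmp: "\<And>v. v \<in> borel_measurable lebesgue \<Longrightarrow> (AE x in lebesgue. x \<notin> ball 0 (R+2) \<longrightarrow> v x = u x) \<Longrightarrow> energy F W u (R+2) \<le> energy F W v (R+2)"
    using mini unfolding is_minimizer_def by auto
  define v where "v x = min (u x) (psi R x)" for x
  have vm: "v \<in> borel_measurable lebesgue" unfolding v_def using um psi_meas by measurable
  have vout: "v x = u x" if "x \<notin> ball 0 (R+2)" for x
  proof -
    have "psi R x = 1" using that by (intro psi_out) (simp add: dist_norm)
    then show ?thesis unfolding v_def using u_bdd[of x] by simp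
  qed
  have vin: "v x = -1" if "x \<in> ball 0 (R+1)" for x
  proof -
    have "psi R x = -1" using that R by (intro psi_in) (simp_all add: dist_norm)
    then show ?thesis unfolding v_def using u_bdd[of x] by simp
  qed
  have vge: "-1 \<le> v x" for x unfolding v_def using u_bdd[of x] psi_bnd[of R x] by simp
  have vle: "v x \<le> psi R x" for x unfolding v_def by simp
  have Ev: "energy F W u (R+2) \<le> energy F W v (R+2)"
    by (rule cmp[OF vm]) (auto simp: vout)
  define P1 where "P1 = (pairs (R+1) :: ((real^'n) \<times> (real^'n)) set)"
  define P2 where "P2 = (pairs (R+2) :: ((real^'n) \<times> (real^'n)) set)"
  define B1 where "B1 = ball (0::real^'n) (R+1)"
  define B2 where "B2 = ball (0::real^'n) (R+2)"
  have P12: "P1 \<subseteq> P2" unfolding P1_def P2_def pairs_def by auto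
  have B12: "B1 \<subseteq> B2" unfolding B1_def B2_def by auto
  have Pm: "P1 \<in> sets (lebesgue \<Otimes>\<^sub>M lebesgue)" "P2 \<in> sets (lebesgue \<Otimes>\<^sub>M lebesgue)"
    unfolding P1_def P2_def by (rule pairs_sets)+
  have Bm: "B1 \<in> sets lebesgue" "B2 \<in> sets lebesgue" unfolding B1_def B2_def by simp_all
  define Y where "Y = IF F u (P2 - P1) + IW W u (B2 - B1)"
  define X where "X = IF F u P1 + IW W u B1"
  define Z where "Z = IF F (psi R) P2 + IW W (psi R) B2"
  have Eu: "energy F W u (R+2) = X + Y"
    unfolding energy_eq X_def Y_def P2_def[symmetric] B2_def[symmetric]
    using IF_split[OF F_meas um Pm P12] IW_split[OF W_meas um Bm B12] by (simp add: ac_simps)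
  have IFv: "IF F v P2 \<le> IF F (psi R) P2 + IF F u (P2 - P1)"
  proof -
    have "IF F v P2 \<le> (\<integral>\<^sup>+ z. indicator P2 z * ennreal (F (psi R (fst z) - psi R (snd z)) (fst z - snd z))
      + indicator (P2 - P1) z * ennreal (F (u (fst z) - u (snd z)) (fst z - snd z)) \<partial>(lebesgue \<Otimes>\<^sub>M lebesgue))"
      unfolding IF_def
    proof (rule nn_integral_mono)
      fix z :: "(real^'n) \<times> (real^'n)"
      obtain x y where z: "z = (x, y)" by (cases z)
      show "indicator P2 z * ennreal (F (v (fst z) - v (snd z)) (fst z - snd z)) \<le>
        indicator P2 z * ennreal (F (psi R (fst z) - psi R (snd z)) (fst z - snd z))
      + indicator (P2 - P1) z * ennreal (F (u (fst z) - u (snd z)) (fst z - snd z))"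
      proof (cases "z \<in> P2")
        case False then show ?thesis by simp
      next
        case inP2: True
        show ?thesis
        proof (cases "x = y")
          case True then show ?thesis using z inP2 by (auto simp: indicator_def)
        next
          case xy: False
          then have xy0: "x - y \<noteq> 0" by simp
          show ?thesis
          proof (cases "z \<in> P1")
            case True
            then have "x \<in> B1 \<or> y \<in> B1" unfolding P1_def pairs_def B1_def z by auto
            then have "\<bar>v x - v y\<bar> \<le> \<bar>psi R x - psi R y\<bar>"
            proof
              assume "x \<in> B1"
              then have "v x = -1" "psi R x = -1" using vin R unfolding B1_def by (auto intro: psi_in simp: dist_norm)
              then show ?thesis using vge[of y] vle[of y] by simp
            next
              assume "y \<in> B1"
              then have "v y = -1" "psi R y = -1" using vin R unfolding B1_def by (auto intro: psi_in simp: dist_norm)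
              then show ?thesis using vge[of x] vle[of x] by simp
            qed
            then have "F (v x - v y) (x - y) \<le> F (psi R x - psi R y) (x - y)" by (rule F_mono[OF xy0])
            then show ?thesis using z inP2 True by (auto simp: indicator_def intro: ennreal_leI)
          next
            case False
            have "\<bar>v x - v y\<bar> \<le> max \<bar>u x - u y\<bar> \<bar>psi R x - psi R y\<bar>" unfolding v_def by (rule abs_min_le)
            then have "F (v x - v y) (x - y) \<le> F (u x - u y) (x - y) \<or> F (v x - v y) (x - y) \<le> F (psi R x - psi R y) (x - y)"
              using F_mono[OF xy0] by (auto simp: max_def split: if_splits)
            then have "ennreal (F (v x - v y) (x - y)) \<le> ennreal (F (psi R x - psi R y) (x - y)) + ennreal (F (u x - u y) (x - y))"
            proof (elim disjE)
              assume "F (v x - v y) (x - y) \<le> F (u x - u y) (x - y)"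
              then have "ennreal (F (v x - v y) (x - y)) \<le> ennreal (F (u x - u y) (x - y))" by (rule ennreal_leI)
              then show ?thesis by (intro add_increasing) auto
            next
              assume "F (v x - v y) (x - y) \<le> F (psi R x - psi R y) (x - y)"
              then have "ennreal (F (v x - v y) (x - y)) \<le> ennreal (F (psi R x - psi R y) (x - y))" by (rule ennreal_leI)
              then show ?thesis by (intro add_increasing2) auto
            qed
            then show ?thesis using z inP2 False by (simp add: indicator_def)
          qed
        qed
      qed
    qed
    also have "\<dots> = IF F (psi R) P2 + IF F u (P2 - P1)"
      unfolding IF_def using Pm meas_F_comp[OF F_meas um] meas_F_comp[OF F_meas psi_meas]
      by (intro nn_integral_add) auto
    finally show ?thesis .
  qed
  have IWv: "IW W v B2 \<le> IW W (psi R) B2 + IW W u (B2 - B1)"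
  proof -
    have "IW W v B2 \<le> (\<integral>\<^sup>+ x. indicator B2 x * ennreal (W (psi R x)) + indicator (B2 - B1) x * ennreal (W (u x)) \<partial>lebesgue)"
      unfolding IW_def
    proof (rule nn_integral_mono)
      fix x :: "real^'n"
      show "indicator B2 x * ennreal (W (v x)) \<le> indicator B2 x * ennreal (W (psi R x)) + indicator (B2 - B1) x * ennreal (W (u x))"
      proof (cases "x \<in> B1")
        case True
        then show ?thesis using vin[of x] W1 unfolding B1_def by simp
      next
        case False
        have "v x = u x \<or> v x = psi R x" unfolding v_def by auto
        then have "ennreal (W (v x)) \<le> ennreal (W (psi R x)) + ennreal (W (u x))"
          by (auto intro: add_increasing add_increasing2)
        then show ?thesis using False by (simp add: indicator_def)
      qed
    qed
    also have "\<dots> = IW W (psi R) B2 + IW W u (B2 - B1)"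
      unfolding IW_def
    proof (rule nn_integral_add)
      have m1: "(\<lambda>x. W (psi R x)) \<in> borel_measurable lebesgue" by (rule measurable_compose[OF psi_meas W_meas])
      show "(\<lambda>x. indicator B2 x * ennreal (W (psi R x))) \<in> borel_measurable lebesgue" using m1 Bm by measurable
      have m2: "(\<lambda>x. W (u x)) \<in> borel_measurable lebesgue" by (rule measurable_compose[OF um W_meas])
      show "(\<lambda>x. indicator (B2 - B1) x * ennreal (W (u x))) \<in> borel_measurable lebesgue" using m2 Bm by measurable
    qed
    finally show ?thesis .
  qed
  have "X + Y \<le> Z + Y"
  proof -
    have "X + Y \<le> energy F W v (R+2)" using Eu Ev by simp
    also have "\<dots> = IF F v P2 + IW W v B2" unfolding energy_eq P2_def B2_def ..
    also have "\<dots> \<le> (IF F (psi R) P2 + IF F u (P2 - P1)) + (IW W (psi R) B2 + IW W u (B2 - B1))"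
      using IFv IWv by (rule add_mono)
    also have "\<dots> = Z + Y" unfolding Z_def Y_def by (simp add: ac_simps)
    finally show ?thesis .
  qed
  moreover have "Y \<noteq> \<infinity>"
  proof -
    have "Y \<le> X + Y" by simp
    also have "\<dots> < \<infinity>" using Eu fin by simp
    finally show ?thesis by simp
  qed
  ultimately have XZ: "X \<le> Z" by (simp add: ennreal_add_left_cancel_le add.commute[of _ Y])
  have "energy F W u R \<le> X"
    unfolding energy_eq X_def
  proof (rule add_mono)
    show "IF F u (pairs R) \<le> IF F u P1" unfolding IF_def P1_def pairs_def
      by (intro nn_integral_mono mult_right_mono) (auto simp: indicator_def)
    show "IW W u (ball 0 R) \<le> IW W u B1" unfolding IW_def B1_def
      by (intro nn_integral_mono mult_right_mono) (auto simp: indicator_def)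
  qed
  with XZ show ?thesis unfolding Z_def P2_def B2_def by (meson order_trans)
qed



definition kap :: "real \<Rightarrow> real \<Rightarrow> 'a::real_normed_vector \<Rightarrow> ennreal" where
  "kap a p z = ennreal (min 1 (norm z) powr p / norm z powr a)"

definition tau :: "real \<Rightarrow> real \<Rightarrow> 'a::real_normed_vector \<Rightarrow> ennreal" where
  "tau a d z = indicator {z. d \<le> norm z} z * ennreal (norm z powr (-a))"

definition Aset :: "real \<Rightarrow> 'a::real_normed_vector set" where
  "Aset R = {x. R + 1 \<le> norm x \<and> norm x < R + 2}"

lemma m01_lip: "\<bar>min 1 (max 0 a) - min 1 (max 0 b)\<bar> \<le> min 1 \<bar>a - (b::real)\<bar>"
  by (auto simp: min_def max_def abs_if)

lemma psi_lip: "\<bar>psi R x - psi R y\<bar> \<le> 2 * min 1 (norm (x - y))"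
proof -
  have "\<bar>psi R x - psi R y\<bar> = 2 * \<bar>min 1 (max 0 (norm x - R - 1)) - min 1 (max 0 (norm y - R - 1))\<bar>"
  proof -
    have "psi R x - psi R y = 2 * (min 1 (max 0 (norm x - R - 1)) - min 1 (max 0 (norm y - R - 1)))"
      unfolding psi_def by (simp add: algebra_simps)
    then show ?thesis by (simp only: abs_mult abs_numeral)
  qed
  also have "\<dots> \<le> 2 * min 1 \<bar>(norm x - R - 1) - (norm y - R - 1)\<bar>" using m01_lip by simp
  also have "\<bar>(norm x - R - 1) - (norm y - R - 1)\<bar> \<le> norm (x - y)"
    using norm_triangle_ineq3[of x y] by simp
  then have "2 * min 1 \<bar>(norm x - R - 1) - (norm y - R - 1)\<bar> \<le> 2 * min 1 (norm (x - y))" by simp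
  finally show ?thesis .
qed

lemma pt_bound:
  fixes F :: "real \<Rightarrow> 'a::euclidean_space \<Rightarrow> real" and x y :: 'a
  assumes F_upper: "\<And>t x. x \<noteq> 0 \<Longrightarrow> F t x \<le> c * (\<bar>t\<bar> powr p / norm x powr a)"
    and c: "0 < c" and p: "1 \<le> p" and a: "0 \<le> a" and R: "0 \<le> R" and xy: "x \<noteq> y"
    and P: "(x, y) \<in> pairs (R+2)"
  shows "ennreal (F (psi R x - psi R y) (x - y)) \<le> ennreal (c * 2 powr p) *
    (indicator (Aset R) x * kap a p (x - y) + indicator (Aset R) y * kap a p (x - y)
     + indicator (ball 0 (R+1)) x * tau a (R + 2 - norm x) (x - y) + indicator (ball 0 (R+1)) y * tau a (R + 2 - norm y) (x - y))"
    (is "_ \<le> ennreal ?c * (?t1 + ?t2 + ?t3 + ?t4)")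
proof -
  have xy0: "x - y \<noteq> 0" using xy by simp
  have c2: "0 \<le> ?c" using c by simp
  have Fb: "F (psi R x - psi R y) (x - y) \<le> c * (\<bar>psi R x - psi R y\<bar> powr p / norm (x - y) powr a)"
    by (rule F_upper[OF xy0])
  have npos: "0 < norm (x - y)" using xy0 by simp
  show ?thesis
  proof (cases "x \<in> Aset R \<or> y \<in> Aset R")
    case True
    have "\<bar>psi R x - psi R y\<bar> powr p \<le> (2 * min 1 (norm (x - y))) powr p"
      using psi_lip p by (intro powr_mono2) auto
    also have "\<dots> = 2 powr p * min 1 (norm (x - y)) powr p" by (simp add: powr_mult)
    finally have "c * (\<bar>psi R x - psi R y\<bar> powr p / norm (x - y) powr a) \<le> c * (2 powr p * min 1 (norm (x - y)) powr p / norm (x - y) powr a)"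
      using c npos by (intro mult_left_mono divide_right_mono) auto
    with Fb have "F (psi R x - psi R y) (x - y) \<le> ?c * (min 1 (norm (x - y)) powr p / norm (x - y) powr a)"
      by (simp add: field_simps)
    then have "ennreal (F (psi R x - psi R y) (x - y)) \<le> ennreal ?c * kap a p (x - y)"
      unfolding kap_def using c2 by (simp add: ennreal_mult'[symmetric] ennreal_leI)
    also have "\<dots> \<le> ennreal ?c * (?t1 + ?t2 + ?t3 + ?t4)"
    proof (rule mult_left_mono)
      show "kap a p (x - y) \<le> ?t1 + ?t2 + ?t3 + ?t4"
        using True by (auto intro: add_increasing add_increasing2 simp: indicator_def)
    qed simp
    finally show ?thesis .
  next
    case False
    have xo: "x \<in> ball 0 (R+1) \<or> R + 2 \<le> norm x" using False unfolding Aset_def by auto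
    have yo: "y \<in> ball 0 (R+1) \<or> R + 2 \<le> norm y" using False unfolding Aset_def by auto
    have Pxy: "norm x < R + 2 \<or> norm y < R + 2" using P unfolding pairs_def by auto
    show ?thesis
    proof (cases "x \<in> ball 0 (R+1) \<and> y \<in> ball 0 (R+1)")
      case True
      then have "psi R x = -1" "psi R y = -1" using R by (auto intro!: psi_in)
      then have "F (psi R x - psi R y) (x - y) \<le> 0" using Fb p by simp
      then have "ennreal (F (psi R x - psi R y) (x - y)) = 0" by (rule ennreal_neg)
      then show ?thesis by simp
    next
      case nb: False
      have key: "\<bar>psi R x - psi R y\<bar> powr p / norm (x - y) powr a \<le> 2 powr p * norm (x - y) powr (-a)"
        if "\<bar>psi R x - psi R y\<bar> \<le> 2" for dummy :: bool
      proof -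
        have "\<bar>psi R x - psi R y\<bar> powr p \<le> 2 powr p" using that p by (intro powr_mono2) auto
        then show ?thesis using npos by (simp add: powr_minus divide_simps)
      qed
      have d2: "\<bar>psi R x - psi R y\<bar> \<le> 2" using psi_bnd[of R x] psi_bnd[of R y] by simp
      have Fk: "ennreal (F (psi R x - psi R y) (x - y)) \<le> ennreal ?c * ennreal (norm (x - y) powr (-a))"
      proof -
        have "F (psi R x - psi R y) (x - y) \<le> c * (2 powr p * norm (x - y) powr (-a))"
          using Fb key[OF d2] c by (meson mult_left_mono less_imp_le order_trans)
        then show ?thesis using c2 by (simp add: ennreal_mult'[symmetric] ennreal_leI mult.assoc)
      qed
      show ?thesis
      proof (cases "x \<in> ball 0 (R+1)")
        case True
        then have yb: "R + 2 \<le> norm y" using nb yo by auto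
        have "R + 2 - norm x \<le> norm (x - y)" using norm_triangle_ineq3[of y x] yb by (simp add: norm_minus_commute)
        then have "ennreal (norm (x - y) powr (-a)) \<le> ?t3" using True unfolding tau_def by simp
        also have "?t3 \<le> ?t1 + ?t2 + ?t3 + ?t4" by (simp add: add_increasing add_increasing2)
        finally show ?thesis using Fk by (meson mult_left_mono order_trans zero_le)
      next
        case False
        then have xb: "R + 2 \<le> norm x" using xo by auto
        then have yB: "y \<in> ball 0 (R+1)" using yo Pxy by auto
        have "R + 2 - norm y \<le> norm (x - y)" using norm_triangle_ineq3[of x y] xb by simp
        then have "ennreal (norm (x - y) powr (-a)) \<le> ?t4" using yB unfolding tau_def by simp
        also have "?t4 \<le> ?t1 + ?t2 + ?t3 + ?t4" by (simp add: add_increasing)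
        finally show ?thesis using Fk by (meson mult_left_mono order_trans zero_le)
      qed
    qed
  qed
qed



lemma tau_alt: "tau a d z = (if d \<le> norm z then ennreal (norm z powr (-a)) else 0)"
  unfolding tau_def by simp

lemma kap_meas: "kap a p \<in> borel_measurable borel"
  unfolding kap_def by measurable

lemma Aset_sets: "Aset R \<in> sets (borel :: 'a::euclidean_space measure)"
  unfolding Aset_def by measurable

lemma Aset_eq: "Aset R = ball (0::'a::real_normed_vector) (R+2) - ball 0 (R+1)"
  unfolding Aset_def by auto

lemma tau_meas1: "(\<lambda>z::'a::euclidean_space \<times> 'a. tau a (R + 2 - norm (fst z)) (fst z - snd z)) \<in> borel_measurable borel"
  unfolding tau_alt borel_prod[symmetric] by measurable

lemma tau_meas2: "(\<lambda>z::'a::euclidean_space \<times> 'a. tau a (R + 2 - norm (snd z)) (fst z - snd z)) \<in> borel_measurable borel"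
  unfolding tau_alt borel_prod[symmetric] by measurable

lemma tau_meas: "tau a d \<in> borel_measurable borel"
  unfolding tau_alt by measurable

lemma AE_offdiag: "AE z in (lebesgue \<Otimes>\<^sub>M lebesgue :: ('a::euclidean_space \<times> 'a) measure). fst z \<noteq> snd z"
proof -
  have "(\<lambda>z::'a \<times> 'a. fst z - snd z) \<in> borel_measurable borel"
    by (intro borel_measurable_continuous_onI continuous_intros)
  then have m: "(\<lambda>z::'a \<times> 'a. fst z - snd z) \<in> borel_measurable (lebesgue \<Otimes>\<^sub>M lebesgue)"
    by (rule meas_pair_borel)
  have S: "(\<lambda>z::'a \<times> 'a. fst z - snd z) -` (UNIV - {0}) \<inter> space (lebesgue \<Otimes>\<^sub>M lebesgue) \<in> sets (lebesgue \<Otimes>\<^sub>M lebesgue)"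
    by (rule measurable_sets[OF m]) simp
  have e: "(\<lambda>z::'a \<times> 'a. fst z - snd z) -` (UNIV - {0}) \<inter> space (lebesgue \<Otimes>\<^sub>M lebesgue) = {z \<in> space (lebesgue \<Otimes>\<^sub>M lebesgue). fst z \<noteq> snd z}"
    by auto
  have S': "{z \<in> space (lebesgue \<Otimes>\<^sub>M lebesgue). fst z \<noteq> snd z} \<in> sets (lebesgue \<Otimes>\<^sub>M lebesgue :: ('a \<times> 'a) measure)"
    using S unfolding e .
  have A: "AE x in (lebesgue :: 'a measure). AE y in (lebesgue :: 'a measure). fst (x, y) \<noteq> snd (x, y)"
  proof (rule AE_I2)
    fix x :: 'a
    have "AE y in lborel. y \<noteq> x" by (rule AE_lborel_singleton)
    then have "AE y in (lebesgue :: 'a measure). y \<noteq> x" by (rule AE_completion)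
    then show "AE y in (lebesgue :: 'a measure). fst (x, y) \<noteq> snd (x, y)" by auto
  qed
  show ?thesis by (rule leb_pair.AE_pair_measure[OF S' A])
qed


lemma g1_int:
  "(\<integral>\<^sup>+z. indicator (Aset R) (fst z) * kap a p (fst z - snd z) \<partial>(lebesgue \<Otimes>\<^sub>M lebesgue :: ('a::euclidean_space \<times> 'a) measure))
    = (\<integral>\<^sup>+(z::'a). kap a p z \<partial>lborel) * emeasure lborel (Aset R :: 'a set)"
proof -
  have km: "kap a p \<in> borel_measurable (borel :: 'a measure)" by (rule kap_meas)
  have "(\<lambda>z::'a \<times> 'a. indicator (Aset R) (fst z) * kap a p (fst z - snd z)) \<in> borel_measurable borel"
    using km Aset_sets[of R] unfolding borel_prod[symmetric] by measurable
  then have m: "(\<lambda>z::'a \<times> 'a. indicator (Aset R) (fst z) * kap a p (fst z - snd z)) \<in> borel_measurable (lebesgue \<Otimes>\<^sub>M lebesgue)"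
    by (rule meas_pair_borel)
  have "(\<integral>\<^sup>+z. indicator (Aset R) (fst z) * kap a p (fst z - snd z) \<partial>(lebesgue \<Otimes>\<^sub>M lebesgue :: ('a \<times> 'a) measure))
    = (\<integral>\<^sup>+(x::'a). \<integral>\<^sup>+(y::'a). indicator (Aset R) x * kap a p (x - y) \<partial>lebesgue \<partial>lebesgue)"
    using leb.nn_integral_fst[OF m] by simp
  also have "\<dots> = (\<integral>\<^sup>+(x::'a). indicator (Aset R) x * (\<integral>\<^sup>+(z::'a). kap a p z \<partial>lborel) \<partial>lebesgue)"
  proof (rule nn_integral_cong)
    fix x :: 'a
    have "(\<lambda>y. kap a p (x - y)) \<in> borel_measurable (lebesgue :: 'a measure)"
      by (intro meas_leb_borel measurable_compose[OF _ km] borel_measurable_continuous_onI continuous_intros)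
    then have "(\<integral>\<^sup>+(y::'a). indicator (Aset R) x * kap a p (x - y) \<partial>lebesgue) = indicator (Aset R) x * (\<integral>\<^sup>+(y::'a). kap a p (x - y) \<partial>lebesgue)"
      by (rule nn_integral_cmult)
    also have "(\<integral>\<^sup>+(y::'a). kap a p (x - y) \<partial>lebesgue) = (\<integral>\<^sup>+(z::'a). kap a p z \<partial>lborel)"
      using nn_int_translate1[OF km, of x] by (simp add: nn_integral_completion)
    finally show "(\<integral>\<^sup>+(y::'a). indicator (Aset R) x * kap a p (x - y) \<partial>lebesgue) = indicator (Aset R) x * (\<integral>\<^sup>+(z::'a). kap a p z \<partial>lborel)" .
  qed
  also have "\<dots> = (\<integral>\<^sup>+(x::'a). (\<integral>\<^sup>+(z::'a). kap a p z \<partial>lborel) * indicator (Aset R) x \<partial>lborel)"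
    by (simp add: nn_integral_completion mult.commute)
  also have "\<dots> = (\<integral>\<^sup>+(z::'a). kap a p z \<partial>lborel) * emeasure lborel (Aset R :: 'a set)"
    using Aset_sets[of R] by (intro nn_integral_cmult_indicator) simp
  finally show ?thesis .
qed

lemma g2_int:
  "(\<integral>\<^sup>+z. indicator (Aset R) (snd z) * kap a p (fst z - snd z) \<partial>(lebesgue \<Otimes>\<^sub>M lebesgue :: ('a::euclidean_space \<times> 'a) measure))
    = (\<integral>\<^sup>+(z::'a). kap a p z \<partial>lborel) * emeasure lborel (Aset R :: 'a set)"
proof -
  have km: "kap a p \<in> borel_measurable (borel :: 'a measure)" by (rule kap_meas)
  have "(\<lambda>z::'a \<times> 'a. indicator (Aset R) (snd z) * kap a p (fst z - snd z)) \<in> borel_measurable borel"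
    using km Aset_sets[of R] unfolding borel_prod[symmetric] by measurable
  then have m: "(\<lambda>z::'a \<times> 'a. indicator (Aset R) (snd z) * kap a p (fst z - snd z)) \<in> borel_measurable (lebesgue \<Otimes>\<^sub>M lebesgue)"
    by (rule meas_pair_borel)
  have "(\<integral>\<^sup>+z. indicator (Aset R) (snd z) * kap a p (fst z - snd z) \<partial>(lebesgue \<Otimes>\<^sub>M lebesgue :: ('a \<times> 'a) measure))
    = (\<integral>\<^sup>+(y::'a). \<integral>\<^sup>+(x::'a). indicator (Aset R) y * kap a p (x - y) \<partial>lebesgue \<partial>lebesgue)"
    using leb_pair.nn_integral_snd[OF m] by simp
  also have "\<dots> = (\<integral>\<^sup>+(y::'a). indicator (Aset R) y * (\<integral>\<^sup>+(z::'a). kap a p z \<partial>lborel) \<partial>lebesgue)"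
  proof (rule nn_integral_cong)
    fix y :: 'a
    have "(\<lambda>x. kap a p (x - y)) \<in> borel_measurable (lebesgue :: 'a measure)"
      by (intro meas_leb_borel measurable_compose[OF _ km] borel_measurable_continuous_onI continuous_intros)
    then have "(\<integral>\<^sup>+(x::'a). indicator (Aset R) y * kap a p (x - y) \<partial>lebesgue) = indicator (Aset R) y * (\<integral>\<^sup>+(x::'a). kap a p (x - y) \<partial>lebesgue)"
      by (rule nn_integral_cmult)
    also have "(\<integral>\<^sup>+(x::'a). kap a p (x - y) \<partial>lebesgue) = (\<integral>\<^sup>+(z::'a). kap a p z \<partial>lborel)"
      using nn_int_translate2[OF km, of y] by (simp add: nn_integral_completion)
    finally show "(\<integral>\<^sup>+(x::'a). indicator (Aset R) y * kap a p (x - y) \<partial>lebesgue) = indicator (Aset R) y * (\<integral>\<^sup>+(z::'a). kap a p z \<partial>lborel)" .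
  qed
  also have "\<dots> = (\<integral>\<^sup>+(y::'a). (\<integral>\<^sup>+(z::'a). kap a p z \<partial>lborel) * indicator (Aset R) y \<partial>lborel)"
    by (simp add: nn_integral_completion mult.commute)
  also have "\<dots> = (\<integral>\<^sup>+(z::'a). kap a p z \<partial>lborel) * emeasure lborel (Aset R :: 'a set)"
    using Aset_sets[of R] by (intro nn_integral_cmult_indicator) simp
  finally show ?thesis .
qed



lemma g3_int:
  fixes Ct a R :: real
  assumes Ct: "\<forall>d>0. (\<integral>\<^sup>+z. indicator {z::'a::euclidean_space. d \<le> norm z} z * ennreal (norm z powr (-a)) \<partial>lborel)
           \<le> ennreal (Ct * d powr (DIM('a) - a))" and Ct0: "0 \<le> Ct" and R: "0 \<le> R"
  shows "(\<integral>\<^sup>+z. indicator (ball 0 (R+1)) (fst z) * tau a (R + 2 - norm (fst z)) (fst z - snd z) \<partial>(lebesgue \<Otimes>\<^sub>M lebesgue :: ('a \<times> 'a) measure))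
    \<le> ennreal Ct * (\<integral>\<^sup>+(x::'a). indicator (ball 0 (R+1)) x * ennreal ((R + 2 - norm x) powr (DIM('a) - a)) \<partial>lborel)"
proof -
  have "(\<lambda>z::'a \<times> 'a. indicator (ball 0 (R+1)) (fst z) * tau a (R + 2 - norm (fst z)) (fst z - snd z)) \<in> borel_measurable borel"
  proof -
    have b: "ball (0::'a) (R+1) \<in> sets borel" by simp
    have t: "(\<lambda>z::'a \<times> 'a. tau a (R + 2 - norm (fst z)) (fst z - snd z)) \<in> borel_measurable (borel \<Otimes>\<^sub>M borel)"
      using tau_meas1[of a R, where 'a='a] unfolding borel_prod .
    show ?thesis using b t unfolding borel_prod[symmetric] by measurable
  qed
  then have m: "(\<lambda>z::'a \<times> 'a. indicator (ball 0 (R+1)) (fst z) * tau a (R + 2 - norm (fst z)) (fst z - snd z)) \<in> borel_measurable (lebesgue \<Otimes>\<^sub>M lebesgue)"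
    by (rule meas_pair_borel)
  have "(\<integral>\<^sup>+z. indicator (ball 0 (R+1)) (fst z) * tau a (R + 2 - norm (fst z)) (fst z - snd z) \<partial>(lebesgue \<Otimes>\<^sub>M lebesgue :: ('a \<times> 'a) measure))
    = (\<integral>\<^sup>+(x::'a). \<integral>\<^sup>+(y::'a). indicator (ball 0 (R+1)) x * tau a (R + 2 - norm x) (x - y) \<partial>lebesgue \<partial>lebesgue)"
    using leb.nn_integral_fst[OF m] by simp
  also have "\<dots> \<le> (\<integral>\<^sup>+(x::'a). ennreal Ct * (indicator (ball 0 (R+1)) x * ennreal ((R + 2 - norm x) powr (DIM('a) - a))) \<partial>lebesgue)"
  proof (rule nn_integral_mono)
    fix x :: 'a
    define d where "d = R + 2 - norm x"
    have tm: "tau a d \<in> borel_measurable (borel :: 'a measure)" by (rule tau_meas)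
    have "(\<lambda>y. tau a d (x - y)) \<in> borel_measurable (lebesgue :: 'a measure)"
      by (intro meas_leb_borel measurable_compose[OF _ tm] borel_measurable_continuous_onI continuous_intros)
    then have "(\<integral>\<^sup>+(y::'a). indicator (ball 0 (R+1)) x * tau a d (x - y) \<partial>lebesgue) = indicator (ball 0 (R+1)) x * (\<integral>\<^sup>+(y::'a). tau a d (x - y) \<partial>lebesgue)"
      by (rule nn_integral_cmult)
    also have "(\<integral>\<^sup>+(y::'a). tau a d (x - y) \<partial>lebesgue) = (\<integral>\<^sup>+(z::'a). tau a d z \<partial>lborel)"
      using nn_int_translate1[OF tm, of x] by (simp add: nn_integral_completion)
    also have "indicator (ball 0 (R+1)) x * (\<integral>\<^sup>+(z::'a). tau a d z \<partial>lborel) \<le> ennreal Ct * (indicator (ball 0 (R+1)) x * ennreal (d powr (DIM('a) - a)))"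
    proof (cases "x \<in> ball 0 (R+1)")
      case True
      then have "0 < d" unfolding d_def by simp
      then have "(\<integral>\<^sup>+(z::'a). tau a d z \<partial>lborel) \<le> ennreal (Ct * d powr (DIM('a) - a))"
        using Ct unfolding tau_def by simp
      then show ?thesis using True Ct0 by (simp add: ennreal_mult')
    qed simp
    finally show "(\<integral>\<^sup>+(y::'a). indicator (ball 0 (R+1)) x * tau a (R + 2 - norm x) (x - y) \<partial>lebesgue) \<le> ennreal Ct * (indicator (ball 0 (R+1)) x * ennreal ((R + 2 - norm x) powr (DIM('a) - a)))"
      unfolding d_def .
  qed
  also have "\<dots> = ennreal Ct * (\<integral>\<^sup>+(x::'a). indicator (ball 0 (R+1)) x * ennreal ((R + 2 - norm x) powr (DIM('a) - a)) \<partial>lebesgue)"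
  proof (rule nn_integral_cmult)
    have b: "ball (0::'a) (R+1) \<in> sets borel" by simp
    have c: "(\<lambda>x::'a. R + 2 - norm x) \<in> borel_measurable borel"
      by (intro borel_measurable_continuous_onI continuous_intros)
    have p: "(\<lambda>x::'a. (R + 2 - norm x) powr (DIM('a) - a)) \<in> borel_measurable borel"
      using c by (intro powr_real_measurable) auto
    show "(\<lambda>x::'a. indicator (ball 0 (R+1)) x * ennreal ((R + 2 - norm x) powr (DIM('a) - a))) \<in> borel_measurable lebesgue"
      by (intro meas_leb_borel borel_measurable_times_ennreal borel_measurable_indicator b measurable_compose[OF p] measurable_ident) simp
  qed
  also have "\<dots> = ennreal Ct * (\<integral>\<^sup>+(x::'a). indicator (ball 0 (R+1)) x * ennreal ((R + 2 - norm x) powr (DIM('a) - a)) \<partial>lborel)"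
    by (simp add: nn_integral_completion)
  finally show ?thesis .
qed

lemma g4_int:
  fixes Ct a R :: real
  assumes Ct: "\<forall>d>0. (\<integral>\<^sup>+z. indicator {z::'a::euclidean_space. d \<le> norm z} z * ennreal (norm z powr (-a)) \<partial>lborel)
           \<le> ennreal (Ct * d powr (DIM('a) - a))" and Ct0: "0 \<le> Ct" and R: "0 \<le> R"
  shows "(\<integral>\<^sup>+z. indicator (ball 0 (R+1)) (snd z) * tau a (R + 2 - norm (snd z)) (fst z - snd z) \<partial>(lebesgue \<Otimes>\<^sub>M lebesgue :: ('a \<times> 'a) measure))
    \<le> ennreal Ct * (\<integral>\<^sup>+(x::'a). indicator (ball 0 (R+1)) x * ennreal ((R + 2 - norm x) powr (DIM('a) - a)) \<partial>lborel)"
proof -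
  have "(\<lambda>z::'a \<times> 'a. indicator (ball 0 (R+1)) (snd z) * tau a (R + 2 - norm (snd z)) (fst z - snd z)) \<in> borel_measurable borel"
  proof -
    have b: "ball (0::'a) (R+1) \<in> sets borel" by simp
    have t: "(\<lambda>z::'a \<times> 'a. tau a (R + 2 - norm (snd z)) (fst z - snd z)) \<in> borel_measurable (borel \<Otimes>\<^sub>M borel)"
      using tau_meas2[of a R, where 'a='a] unfolding borel_prod .
    show ?thesis using b t unfolding borel_prod[symmetric] by measurable
  qed
  then have m: "(\<lambda>z::'a \<times> 'a. indicator (ball 0 (R+1)) (snd z) * tau a (R + 2 - norm (snd z)) (fst z - snd z)) \<in> borel_measurable (lebesgue \<Otimes>\<^sub>M lebesgue)"
    by (rule meas_pair_borel)
  have "(\<integral>\<^sup>+z. indicator (ball 0 (R+1)) (snd z) * tau a (R + 2 - norm (snd z)) (fst z - snd z) \<partial>(lebesgue \<Otimes>\<^sub>M lebesgue :: ('a \<times> 'a) measure))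
    = (\<integral>\<^sup>+(y::'a). \<integral>\<^sup>+(x::'a). indicator (ball 0 (R+1)) y * tau a (R + 2 - norm y) (x - y) \<partial>lebesgue \<partial>lebesgue)"
    using leb_pair.nn_integral_snd[OF m] by simp
  also have "\<dots> \<le> (\<integral>\<^sup>+(y::'a). ennreal Ct * (indicator (ball 0 (R+1)) y * ennreal ((R + 2 - norm y) powr (DIM('a) - a))) \<partial>lebesgue)"
  proof (rule nn_integral_mono)
    fix y :: 'a
    define d where "d = R + 2 - norm y"
    have tm: "tau a d \<in> borel_measurable (borel :: 'a measure)" by (rule tau_meas)
    have "(\<lambda>x. tau a d (x - y)) \<in> borel_measurable (lebesgue :: 'a measure)"
      by (intro meas_leb_borel measurable_compose[OF _ tm] borel_measurable_continuous_onI continuous_intros)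
    then have "(\<integral>\<^sup>+(x::'a). indicator (ball 0 (R+1)) y * tau a d (x - y) \<partial>lebesgue) = indicator (ball 0 (R+1)) y * (\<integral>\<^sup>+(x::'a). tau a d (x - y) \<partial>lebesgue)"
      by (rule nn_integral_cmult)
    also have "(\<integral>\<^sup>+(x::'a). tau a d (x - y) \<partial>lebesgue) = (\<integral>\<^sup>+(z::'a). tau a d z \<partial>lborel)"
      using nn_int_translate2[OF tm, of y] by (simp add: nn_integral_completion)
    also have "indicator (ball 0 (R+1)) y * (\<integral>\<^sup>+(z::'a). tau a d z \<partial>lborel) \<le> ennreal Ct * (indicator (ball 0 (R+1)) y * ennreal (d powr (DIM('a) - a)))"
    proof (cases "y \<in> ball 0 (R+1)")
      case True
      then have "0 < d" unfolding d_def by simp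
      then have "(\<integral>\<^sup>+(z::'a). tau a d z \<partial>lborel) \<le> ennreal (Ct * d powr (DIM('a) - a))"
        using Ct unfolding tau_def by simp
      then show ?thesis using True Ct0 by (simp add: ennreal_mult')
    qed simp
    finally show "(\<integral>\<^sup>+(x::'a). indicator (ball 0 (R+1)) y * tau a (R + 2 - norm y) (x - y) \<partial>lebesgue) \<le> ennreal Ct * (indicator (ball 0 (R+1)) y * ennreal ((R + 2 - norm y) powr (DIM('a) - a)))"
      unfolding d_def .
  qed
  also have "\<dots> = ennreal Ct * (\<integral>\<^sup>+(x::'a). indicator (ball 0 (R+1)) x * ennreal ((R + 2 - norm x) powr (DIM('a) - a)) \<partial>lebesgue)"
  proof (rule nn_integral_cmult)
    have b: "ball (0::'a) (R+1) \<in> sets borel" by simp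
    have c: "(\<lambda>x::'a. R + 2 - norm x) \<in> borel_measurable borel"
      by (intro borel_measurable_continuous_onI continuous_intros)
    have p: "(\<lambda>x::'a. (R + 2 - norm x) powr (DIM('a) - a)) \<in> borel_measurable borel"
      using c by (intro powr_real_measurable) auto
    show "(\<lambda>x::'a. indicator (ball 0 (R+1)) x * ennreal ((R + 2 - norm x) powr (DIM('a) - a))) \<in> borel_measurable lebesgue"
      by (intro meas_leb_borel borel_measurable_times_ennreal borel_measurable_indicator b measurable_compose[OF p] measurable_ident) simp
  qed
  also have "\<dots> = ennreal Ct * (\<integral>\<^sup>+(x::'a). indicator (ball 0 (R+1)) x * ennreal ((R + 2 - norm x) powr (DIM('a) - a)) \<partial>lborel)"
    by (simp add: nn_integral_completion)
  finally show ?thesis .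
qed



lemma gm1: "(\<lambda>z::'a::euclidean_space \<times> 'a. indicator (Aset R) (fst z) * kap a p (fst z - snd z)) \<in> borel_measurable (lebesgue \<Otimes>\<^sub>M lebesgue)"
proof -
  have km: "kap a p \<in> borel_measurable (borel :: 'a measure)" by (rule kap_meas)
  have "(\<lambda>z::'a \<times> 'a. indicator (Aset R) (fst z) * kap a p (fst z - snd z)) \<in> borel_measurable borel"
    using km Aset_sets[of R] unfolding borel_prod[symmetric] by measurable
  then show ?thesis by (rule meas_pair_borel)
qed

lemma gm2: "(\<lambda>z::'a::euclidean_space \<times> 'a. indicator (Aset R) (snd z) * kap a p (fst z - snd z)) \<in> borel_measurable (lebesgue \<Otimes>\<^sub>M lebesgue)"
proof -
  have km: "kap a p \<in> borel_measurable (borel :: 'a measure)" by (rule kap_meas)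
  have "(\<lambda>z::'a \<times> 'a. indicator (Aset R) (snd z) * kap a p (fst z - snd z)) \<in> borel_measurable borel"
    using km Aset_sets[of R] unfolding borel_prod[symmetric] by measurable
  then show ?thesis by (rule meas_pair_borel)
qed

lemma gm3: "(\<lambda>z::'a::euclidean_space \<times> 'a. indicator (ball 0 (R+1)) (fst z) * tau a (R + 2 - norm (fst z)) (fst z - snd z)) \<in> borel_measurable (lebesgue \<Otimes>\<^sub>M lebesgue)"
proof -
  have b: "ball (0::'a) (R+1) \<in> sets borel" by simp
  have t: "(\<lambda>z::'a \<times> 'a. tau a (R + 2 - norm (fst z)) (fst z - snd z)) \<in> borel_measurable (borel \<Otimes>\<^sub>M borel)"
    using tau_meas1[of a R, where 'a='a] unfolding borel_prod .
  have "(\<lambda>z::'a \<times> 'a. indicator (ball 0 (R+1)) (fst z) * tau a (R + 2 - norm (fst z)) (fst z - snd z)) \<in> borel_measurable borel"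
    using b t unfolding borel_prod[symmetric] by measurable
  then show ?thesis by (rule meas_pair_borel)
qed

lemma gm4: "(\<lambda>z::'a::euclidean_space \<times> 'a. indicator (ball 0 (R+1)) (snd z) * tau a (R + 2 - norm (snd z)) (fst z - snd z)) \<in> borel_measurable (lebesgue \<Otimes>\<^sub>M lebesgue)"
proof -
  have b: "ball (0::'a) (R+1) \<in> sets borel" by simp
  have t: "(\<lambda>z::'a \<times> 'a. tau a (R + 2 - norm (snd z)) (fst z - snd z)) \<in> borel_measurable (borel \<Otimes>\<^sub>M borel)"
    using tau_meas2[of a R, where 'a='a] unfolding borel_prod .
  have "(\<lambda>z::'a \<times> 'a. indicator (ball 0 (R+1)) (snd z) * tau a (R + 2 - norm (snd z)) (fst z - snd z)) \<in> borel_measurable borel"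
    using b t unfolding borel_prod[symmetric] by measurable
  then show ?thesis by (rule meas_pair_borel)
qed

lemma IF_total:
  fixes F :: "real \<Rightarrow> 'a::euclidean_space \<Rightarrow> real" and a c p R Ct :: real
  assumes F_upper: "\<And>t x. x \<noteq> 0 \<Longrightarrow> F t x \<le> c * (\<bar>t\<bar> powr p / norm x powr a)"
    and c: "0 < c" and p: "1 \<le> p" and a: "0 \<le> a" and R: "0 \<le> R"
    and Ct: "\<forall>d>0. (\<integral>\<^sup>+z. indicator {z::'a. d \<le> norm z} z * ennreal (norm z powr (-a)) \<partial>lborel)
           \<le> ennreal (Ct * d powr (DIM('a) - a))" and Ct0: "0 \<le> Ct"
  shows "IF F (psi R) (pairs (R+2)) \<le> ennreal (c * 2 powr p) *
     (2 * ((\<integral>\<^sup>+(z::'a). kap a p z \<partial>lborel) * emeasure lborel (Aset R :: 'a set))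
      + 2 * (ennreal Ct * (\<integral>\<^sup>+(x::'a). indicator (ball 0 (R+1)) x * ennreal ((R + 2 - norm x) powr (DIM('a) - a)) \<partial>lborel)))"
proof -
  define g1 where "g1 = (\<lambda>z::'a \<times> 'a. indicator (Aset R) (fst z) * kap a p (fst z - snd z))"
  define g2 where "g2 = (\<lambda>z::'a \<times> 'a. indicator (Aset R) (snd z) * kap a p (fst z - snd z))"
  define g3 where "g3 = (\<lambda>z::'a \<times> 'a. indicator (ball 0 (R+1)) (fst z) * tau a (R + 2 - norm (fst z)) (fst z - snd z))"
  define g4 where "g4 = (\<lambda>z::'a \<times> 'a. indicator (ball 0 (R+1)) (snd z) * tau a (R + 2 - norm (snd z)) (fst z - snd z))"
  define M where "M = (lebesgue \<Otimes>\<^sub>M lebesgue :: ('a \<times> 'a) measure)"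
  have m1: "g1 \<in> borel_measurable M" unfolding g1_def M_def by (rule gm1)
  have m2: "g2 \<in> borel_measurable M" unfolding g2_def M_def by (rule gm2)
  have m3: "g3 \<in> borel_measurable M" unfolding g3_def M_def by (rule gm3)
  have m4: "g4 \<in> borel_measurable M" unfolding g4_def M_def by (rule gm4)
  have "IF F (psi R) (pairs (R+2)) \<le> (\<integral>\<^sup>+z. ennreal (c * 2 powr p) * (g1 z + g2 z + g3 z + g4 z) \<partial>M)"
    unfolding IF_def M_def[symmetric]
  proof (rule nn_integral_mono_AE)
    show "AE z in M. indicator (pairs (R+2)) z * ennreal (F (psi R (fst z) - psi R (snd z)) (fst z - snd z))
        \<le> ennreal (c * 2 powr p) * (g1 z + g2 z + g3 z + g4 z)"
      using AE_offdiag[where 'a='a] unfolding M_def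
    proof (rule AE_mp, intro AE_I2 impI)
      fix z :: "'a \<times> 'a" assume ne: "fst z \<noteq> snd z"
      obtain x y where z: "z = (x, y)" by (cases z)
      show "indicator (pairs (R+2)) z * ennreal (F (psi R (fst z) - psi R (snd z)) (fst z - snd z))
        \<le> ennreal (c * 2 powr p) * (g1 z + g2 z + g3 z + g4 z)"
      proof (cases "z \<in> pairs (R+2)")
        case True
        then show ?thesis using pt_bound[OF F_upper c p a R, of x y] ne z
          unfolding g1_def g2_def g3_def g4_def by simp
      qed simp
    qed
  qed
  also have "\<dots> = ennreal (c * 2 powr p) * (integral\<^sup>N M g1 + integral\<^sup>N M g2 + integral\<^sup>N M g3 + integral\<^sup>N M g4)"
    using m1 m2 m3 m4 by (simp add: nn_integral_cmult nn_integral_add)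
  also have "\<dots> \<le> ennreal (c * 2 powr p) *
     (2 * ((\<integral>\<^sup>+(z::'a). kap a p z \<partial>lborel) * emeasure lborel (Aset R :: 'a set))
      + 2 * (ennreal Ct * (\<integral>\<^sup>+(x::'a). indicator (ball 0 (R+1)) x * ennreal ((R + 2 - norm x) powr (DIM('a) - a)) \<partial>lborel)))"
  proof (rule mult_left_mono)
    have 1: "integral\<^sup>N M g1 = (\<integral>\<^sup>+(z::'a). kap a p z \<partial>lborel) * emeasure lborel (Aset R :: 'a set)"
      unfolding M_def g1_def by (rule g1_int)
    have 2: "integral\<^sup>N M g2 = (\<integral>\<^sup>+(z::'a). kap a p z \<partial>lborel) * emeasure lborel (Aset R :: 'a set)"
      unfolding M_def g2_def by (rule g2_int)
    have 3: "integral\<^sup>N M g3 \<le> ennreal Ct * (\<integral>\<^sup>+(x::'a). indicator (ball 0 (R+1)) x * ennreal ((R + 2 - norm x) powr (DIM('a) - a)) \<partial>lborel)"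
      unfolding M_def g3_def by (rule g3_int[OF Ct Ct0 R])
    have 4: "integral\<^sup>N M g4 \<le> ennreal Ct * (\<integral>\<^sup>+(x::'a). indicator (ball 0 (R+1)) x * ennreal ((R + 2 - norm x) powr (DIM('a) - a)) \<partial>lborel)"
      unfolding M_def g4_def by (rule g4_int[OF Ct Ct0 R])
    show "integral\<^sup>N M g1 + integral\<^sup>N M g2 + integral\<^sup>N M g3 + integral\<^sup>N M g4 \<le>
     2 * ((\<integral>\<^sup>+(z::'a). kap a p z \<partial>lborel) * emeasure lborel (Aset R :: 'a set))
      + 2 * (ennreal Ct * (\<integral>\<^sup>+(x::'a). indicator (ball 0 (R+1)) x * ennreal ((R + 2 - norm x) powr (DIM('a) - a)) \<partial>lborel))"
      using 1 2 add_mono[OF 3 4] by (simp add: mult_2 add.assoc)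
  qed simp
  finally show ?thesis .
qed



lemma IW_bound:
  fixes W :: "real \<Rightarrow> real" and Mw R :: real
  assumes Wb: "\<And>t. -1 \<le> t \<Longrightarrow> t \<le> 1 \<Longrightarrow> W t \<le> Mw" and W1: "W (-1) = 0" and R: "0 \<le> R"
  shows "IW W (psi R) (ball (0::'a::euclidean_space) (R+2)) \<le> ennreal (Mw * (measure lborel (ball (0::'a) 1) * DIM('a) * (R+2) ^ (DIM('a) - 1)))"
proof -
  have Mw0: "0 \<le> Mw" using Wb[of "-1"] W1 by simp
  have "IW W (psi R) (ball (0::'a) (R+2)) \<le> (\<integral>\<^sup>+(x::'a). ennreal Mw * indicator (ball 0 (R+2) - ball 0 (R+1)) x \<partial>lebesgue)"
    unfolding IW_def
  proof (rule nn_integral_mono)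
    fix x :: 'a
    show "indicator (ball 0 (R+2)) x * ennreal (W (psi R x)) \<le> ennreal Mw * indicator (ball 0 (R+2) - ball 0 (R+1)) x"
    proof (cases "x \<in> ball 0 (R+1)")
      case True
      then have "psi R x = -1" using R by (intro psi_in) auto
      then show ?thesis using W1 by simp
    next
      case False
      have "W (psi R x) \<le> Mw" using psi_bnd[of R x] by (intro Wb) auto
      then show ?thesis using False by (auto simp: indicator_def intro: ennreal_leI)
    qed
  qed
  also have "\<dots> = ennreal Mw * emeasure lborel (ball (0::'a) (R+2) - ball 0 (R+1))"
    by (subst nn_integral_cmult_indicator) auto
  also have "\<dots> \<le> ennreal Mw * ennreal (measure lborel (ball (0::'a) 1) * DIM('a) * (R+2) ^ (DIM('a) - 1))"
    using R by (intro mult_left_mono annulus_meas) auto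
  also have "\<dots> = ennreal (Mw * (measure lborel (ball (0::'a) 1) * DIM('a) * (R+2) ^ (DIM('a) - 1)))"
    using Mw0 by (simp add: ennreal_mult')
  finally show ?thesis .
qed


lemma Z_bound:
  fixes F :: "real \<Rightarrow> 'a::euclidean_space \<Rightarrow> real" and W :: "real \<Rightarrow> real" and Mw c p \<sigma> :: real
  assumes F_upper: "\<And>t x. x \<noteq> 0 \<Longrightarrow> F t x \<le> c * (\<bar>t\<bar> powr p / norm x powr (DIM('a) + \<sigma>))"
    and c: "0 < c" and p: "1 \<le> p" and \<sigma>: "0 < \<sigma>" "\<sigma> < p"
    and Wb: "\<And>t. -1 \<le> t \<Longrightarrow> t \<le> 1 \<Longrightarrow> W t \<le> Mw" and W1: "W (-1) = 0"
  shows "\<exists>C1\<ge>0. \<exists>C2\<ge>0. \<forall>R\<ge>0. IF F (psi R) (pairs (R+2)) + IW W (psi R) (ball (0::'a) (R+2))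
     \<le> ennreal (C1 * (R+2)^(DIM('a)-1) + C2 * (R+1)^(DIM('a)-1) * (\<Sum>j=1..nat \<lceil>R+1\<rceil>. real j powr (-\<sigma>)))"
proof -
  define a where "a = DIM('a) + \<sigma>"
  define \<omega> where "\<omega> = measure lborel (ball (0::'a) 1)"
  define N where "N = DIM('a)"
  have Mw0: "0 \<le> Mw" using Wb[of "-1"] W1 by simp
  have \<omega>0: "0 \<le> \<omega>" unfolding \<omega>_def by simp
  obtain K where K: "K \<ge> 0" "(\<integral>\<^sup>+z. kap a p (z::'a) \<partial>lborel) \<le> ennreal K"
    using kappa_int[of p a, where 'a='a] p \<sigma> unfolding a_def kap_def by fastforce
  obtain Ct where Ct0: "Ct \<ge> 0" and Ct: "\<forall>d>0. (\<integral>\<^sup>+z. indicator {z::'a. d \<le> norm z} z * ennreal (norm z powr (-a)) \<partial>lborel)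
           \<le> ennreal (Ct * d powr (DIM('a) - a))"
    using tail_int[of a, where 'a='a] \<sigma> unfolding a_def by auto
  define C1 where "C1 = c * 2 powr p * 2 * K * \<omega> * N + Mw * \<omega> * N"
  define C2 where "C2 = c * 2 powr p * 2 * Ct * \<omega> * N"
  have C1: "0 \<le> C1" unfolding C1_def using c K Mw0 \<omega>0 by simp
  have C2: "0 \<le> C2" unfolding C2_def using c Ct0 \<omega>0 by simp
  have main: "IF F (psi R) (pairs (R+2)) + IW W (psi R) (ball (0::'a) (R+2))
     \<le> ennreal (C1 * (R+2)^(DIM('a)-1) + C2 * (R+1)^(DIM('a)-1) * (\<Sum>j=1..nat \<lceil>R+1\<rceil>. real j powr (-\<sigma>)))"
    if R: "0 \<le> R" for R
  proof -
    define H where "H = (\<Sum>j=1..nat \<lceil>R+1\<rceil>. real j powr (-\<sigma>))"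
    define \<alpha> where "\<alpha> = \<omega> * N * (R+2)^(N-1)"
    define \<beta> where "\<beta> = \<omega> * N * (R+1)^(N-1) * H"
    have H0: "0 \<le> H" unfolding H_def by (intro sum_nonneg) simp
    have \<alpha>0: "0 \<le> \<alpha>" unfolding \<alpha>_def using \<omega>0 R by simp
    have \<beta>0: "0 \<le> \<beta>" unfolding \<beta>_def using \<omega>0 R H0 by simp
    have F_upper': "\<And>t x. x \<noteq> 0 \<Longrightarrow> F t x \<le> c * (\<bar>t\<bar> powr p / norm x powr a)"
      using F_upper unfolding a_def .
    have IFb: "IF F (psi R) (pairs (R+2)) \<le> ennreal (c * 2 powr p) *
     (2 * ((\<integral>\<^sup>+(z::'a). kap a p z \<partial>lborel) * emeasure lborel (Aset R :: 'a set))
      + 2 * (ennreal Ct * (\<integral>\<^sup>+(x::'a). indicator (ball 0 (R+1)) x * ennreal ((R + 2 - norm x) powr (DIM('a) - a)) \<partial>lborel)))"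
      using IF_total[OF F_upper' c p _ R Ct Ct0] \<sigma> unfolding a_def by simp
    have A: "emeasure lborel (Aset R :: 'a set) \<le> ennreal \<alpha>"
      unfolding Aset_eq \<alpha>_def \<omega>_def N_def using R by (intro annulus_meas) auto
    have L: "(\<integral>\<^sup>+(x::'a). indicator (ball 0 (R+1)) x * ennreal ((R + 2 - norm x) powr (DIM('a) - a)) \<partial>lborel) \<le> ennreal \<beta>"
    proof -
      have "(\<integral>\<^sup>+(x::'a). indicator (ball 0 (R+1)) x * ennreal ((R + 2 - norm x) powr (DIM('a) - a)) \<partial>lborel)
        = (\<integral>\<^sup>+(x::'a). indicator (ball 0 (R+1)) x * ennreal ((R + 1 + 1 - norm x) powr (-\<sigma>)) \<partial>lborel)"
        unfolding a_def by (simp add: add.assoc)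
      also have "\<dots> \<le> ennreal (measure lborel (ball (0::'a) 1) * DIM('a) * (R+1) ^ (DIM('a) - 1) * (\<Sum>j=1..nat \<lceil>R+1\<rceil>. real j powr (-\<sigma>)))"
        using R \<sigma> by (intro layer_int) auto
      finally show ?thesis unfolding \<beta>_def H_def \<omega>_def N_def .
    qed
    have e1: "(\<integral>\<^sup>+(z::'a). kap a p z \<partial>lborel) * emeasure lborel (Aset R :: 'a set) \<le> ennreal (K * \<alpha>)"
      using mult_mono[OF K(2) A] K \<alpha>0 by (simp add: ennreal_mult')
    have e2: "ennreal Ct * (\<integral>\<^sup>+(x::'a). indicator (ball 0 (R+1)) x * ennreal ((R + 2 - norm x) powr (DIM('a) - a)) \<partial>lborel) \<le> ennreal (Ct * \<beta>)"
      using mult_left_mono[OF L] Ct0 by (simp add: ennreal_mult')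
    have "IF F (psi R) (pairs (R+2)) \<le> ennreal (c * 2 powr p) * (2 * ennreal (K * \<alpha>) + 2 * ennreal (Ct * \<beta>))"
    proof (rule order_trans[OF IFb], rule mult_left_mono)
      show "2 * ((\<integral>\<^sup>+(z::'a). kap a p z \<partial>lborel) * emeasure lborel (Aset R :: 'a set))
      + 2 * (ennreal Ct * (\<integral>\<^sup>+(x::'a). indicator (ball 0 (R+1)) x * ennreal ((R + 2 - norm x) powr (DIM('a) - a)) \<partial>lborel))
        \<le> 2 * ennreal (K * \<alpha>) + 2 * ennreal (Ct * \<beta>)"
        by (intro add_mono mult_left_mono e1 e2) simp_all
    qed simp
    also have "\<dots> = ennreal (c * 2 powr p * (2 * (K * \<alpha>) + 2 * (Ct * \<beta>)))"
      using c K Ct0 \<alpha>0 \<beta>0 by (simp add: ennreal_mult' ennreal_plus)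
    finally have IF2: "IF F (psi R) (pairs (R+2)) \<le> ennreal (c * 2 powr p * (2 * (K * \<alpha>) + 2 * (Ct * \<beta>)))" .
    have IW2: "IW W (psi R) (ball (0::'a) (R+2)) \<le> ennreal (Mw * \<alpha>)"
      using IW_bound[where 'a='a and W=W and Mw=Mw and R=R, OF Wb W1 R] unfolding \<alpha>_def \<omega>_def N_def by simp
    have "IF F (psi R) (pairs (R+2)) + IW W (psi R) (ball (0::'a) (R+2)) \<le> ennreal (c * 2 powr p * (2 * (K * \<alpha>) + 2 * (Ct * \<beta>))) + ennreal (Mw * \<alpha>)"
      using IF2 IW2 by (rule add_mono)
    also have "\<dots> = ennreal (c * 2 powr p * (2 * (K * \<alpha>) + 2 * (Ct * \<beta>)) + Mw * \<alpha>)"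
      using c K Ct0 \<alpha>0 \<beta>0 Mw0 by (simp add: ennreal_plus)
    also have "c * 2 powr p * (2 * (K * \<alpha>) + 2 * (Ct * \<beta>)) + Mw * \<alpha> = C1 * (R+2)^(DIM('a)-1) + C2 * (R+1)^(DIM('a)-1) * H"
      unfolding C1_def C2_def \<alpha>_def \<beta>_def N_def by (simp add: algebra_simps)
    finally show ?thesis unfolding H_def .
  qed
  show ?thesis using C1 C2 main by blast
qed



lemma lim_aux:
  fixes e :: "real \<Rightarrow> ennreal" and g :: "real \<Rightarrow> real" and N :: nat
  assumes b: "\<forall>R\<ge>R1. e R \<le> ennreal (C * g R)" and g0: "\<forall>R\<ge>R1. 0 \<le> g R" and C: "0 \<le> C"
    and lim: "((\<lambda>R. g R / R^N) \<longlongrightarrow> 0) at_top"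
  shows "((\<lambda>R. e R / ennreal (R^N)) \<longlongrightarrow> 0) at_top"
proof (rule tendsto_sandwich[of "\<lambda>_. 0" _ _ "\<lambda>R. ennreal (C * (g R / R^N))"])
  show "eventually (\<lambda>R. e R / ennreal (R^N) \<le> ennreal (C * (g R / R^N))) at_top"
    unfolding eventually_at_top_linorder
  proof (intro exI[of _ "max R1 1"] allI impI)
    fix R :: real assume R: "max R1 1 \<le> R"
    have "e R / ennreal (R^N) \<le> ennreal (C * g R) / ennreal (R^N)"
      using b R by (intro divide_right_mono_ennreal) auto
    also have "\<dots> = ennreal (C * g R / R^N)"
      using g0 R C by (intro divide_ennreal) auto
    finally show "e R / ennreal (R^N) \<le> ennreal (C * (g R / R^N))" by simp
  qed
  have "((\<lambda>R. C * (g R / R^N)) \<longlongrightarrow> C * 0) at_top" by (intro tendsto_mult tendsto_const lim)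
  then show "((\<lambda>R. ennreal (C * (g R / R^N))) \<longlongrightarrow> 0) at_top"
    using tendsto_ennrealI by fastforce
qed auto

theorem theorem9:
  fixes F :: "real \<Rightarrow> real^'n \<Rightarrow> real" and W :: "real \<Rightarrow> real"
    and u :: "real^'n \<Rightarrow> real" and s p c_lo c_hi :: real
  assumes s: "0 < s" "s < 1" and p: "1 \<le> p"
    and F_meas: "(\<lambda>z. F (fst z) (snd z)) \<in> borel_measurable borel"
    and F_nonneg: "\<And>t x. x \<noteq> 0 \<Longrightarrow> 0 \<le> F t x"
    and F_sym1: "\<And>t x. x \<noteq> 0 \<Longrightarrow> F t x = F (-t) x"
    and F_sym2: "\<And>t x. x \<noteq> 0 \<Longrightarrow> F (-t) x = F (-t) (-x)"
    and F_mono: "\<And>t1 t2 x. x \<noteq> 0 \<Longrightarrow> \<bar>t1\<bar> \<le> \<bar>t2\<bar> \<Longrightarrow> F t1 x \<le> F t2 x"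
    and c_pos: "0 < c_lo" "0 < c_hi"
    and F_lower: "\<And>t x. x \<noteq> 0 \<Longrightarrow>
        c_lo * (\<bar>t\<bar> powr p / norm x powr (CARD('n) + s * p)
                - 1 / norm x powr (CARD('n) + s * p - p)) \<le> F t x"
    and F_upper: "\<And>t x. x \<noteq> 0 \<Longrightarrow>
        F t x \<le> c_hi * (\<bar>t\<bar> powr p / norm x powr (CARD('n) + s * p))"
    and W_meas: "W \<in> borel_measurable borel"
    and W_nonneg: "\<And>t. 0 \<le> W t"
    and W_C2: "C2_on {-1..1} W"
    and W_wells: "W 1 = 0" "W (-1) = 0"
    and u_bdd: "\<And>x. \<bar>u x\<bar> \<le> 1"
    and u_min: "\<exists>R0. \<forall>R \<ge> R0. is_minimizer F W u (R + 2)"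
  shows "((\<lambda>R. energy F W u R / ennreal (R ^ CARD('n))) \<longlongrightarrow> 0) at_top \<and>
     (s \<in> {1/p<..<1} \<longrightarrow> (\<exists>C>0. \<exists>R1. \<forall>R \<ge> R1.
           energy F W u R \<le> ennreal (C * R powr (real CARD('n) - 1)))) \<and>
     (s = 1/p \<longrightarrow> (\<exists>C>0. \<exists>R1. \<forall>R \<ge> R1.
           energy F W u R \<le> ennreal (C * R powr (real CARD('n) - 1) * ln R))) \<and>
     (s \<in> {0<..<1/p} \<longrightarrow> (\<exists>C>0. \<exists>R1. \<forall>R \<ge> R1.
           energy F W u R \<le> ennreal (C * R powr (real CARD('n) - s * p))))"
proof -
  define N where "N = CARD('n)"
  have N1: "1 \<le> N" unfolding N_def by (simp add: Suc_leI)
  define \<sigma> where "\<sigma> = s * p"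
  have \<sigma>0: "0 < \<sigma>" unfolding \<sigma>_def using s p by simp
  have \<sigma>p: "\<sigma> < p" unfolding \<sigma>_def using s p by simp
  obtain W1 W2 where Wd: "\<forall>t\<in>{-1..1}. (W has_real_derivative W1 t) (at t within {-1..1})"
    using W_C2 unfolding C2_on_def by blast
  have Wc: "continuous_on {-1..1} W" using Wd by (intro DERIV_continuous_on) auto
  obtain x0 where x0: "x0 \<in> {-1..1::real}" "\<forall>y\<in>{-1..1}. W y \<le> W x0"
    using continuous_attains_sup[OF compact_Icc _ Wc] by auto
  have Wb: "\<And>t. -1 \<le> t \<Longrightarrow> t \<le> 1 \<Longrightarrow> W t \<le> W x0" using x0 by auto
  have F_upper': "\<And>t x. x \<noteq> 0 \<Longrightarrow> F t x \<le> c_hi * (\<bar>t\<bar> powr p / norm x powr (DIM(real^'n) + \<sigma>))"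
    using F_upper unfolding \<sigma>_def by simp
  obtain C1 C2 where C1: "0 \<le> C1" and C2: "0 \<le> C2" and Zb: "\<forall>R\<ge>0. IF F (psi R) (pairs (R+2)) + IW W (psi R) (ball (0::real^'n) (R+2))
     \<le> ennreal (C1 * (R+2)^(DIM(real^'n)-1) + C2 * (R+1)^(DIM(real^'n)-1) * (\<Sum>j=1..nat \<lceil>R+1\<rceil>. real j powr (-\<sigma>)))"
    using Z_bound[where F=F and W=W and Mw="W x0" and c=c_hi and p=p and \<sigma>=\<sigma>, OF F_upper' c_pos(2) p \<sigma>0 \<sigma>p Wb W_wells(2)] by blast
  obtain R0 where R0: "\<forall>R\<ge>R0. is_minimizer F W u (R + 2)" using u_min by blast
  define R3 where "R3 = max R0 3"
  define H where "H R = (\<Sum>j=1..nat \<lceil>R+1\<rceil>. real j powr (-\<sigma>))" for R :: real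
  have key: "energy F W u R \<le> ennreal (C1 * (R+2)^(N-1) + C2 * (R+1)^(N-1) * H R)" if R: "R \<ge> R3" for R
  proof -
    have "energy F W u R \<le> IF F (psi R) (pairs (R+2)) + IW W (psi R) (ball (0::real^'n) (R+2))"
      using R R0 unfolding R3_def
      by (intro competitor[OF F_meas F_mono W_meas W_wells(2) u_bdd]) auto
    also have "\<dots> \<le> ennreal (C1 * (R+2)^(N-1) + C2 * (R+1)^(N-1) * H R)"
      using Zb R unfolding R3_def H_def N_def by auto
    finally show ?thesis .
  qed
  have H0: "0 \<le> H R" for R :: real unfolding H_def by (intro sum_nonneg) simp
  have pw: "(R+2)^(N-1) \<le> 2^(N-1) * R^(N-1)" "(R+1)^(N-1) \<le> 2^(N-1) * R^(N-1)" if "R \<ge> 3" for R :: real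
  proof -
    have "(R+2)^(N-1) \<le> (2*R)^(N-1)" using that by (intro power_mono) auto
    moreover have "(R+1)^(N-1) \<le> (2*R)^(N-1)" using that by (intro power_mono) auto
    ultimately show "(R+2)^(N-1) \<le> 2^(N-1) * R^(N-1)" "(R+1)^(N-1) \<le> 2^(N-1) * R^(N-1)"
      by (simp_all add: power_mult_distrib)
  qed
  have Jb: "real (nat \<lceil>R+1\<rceil>) \<le> 2 * R" "1 \<le> nat \<lceil>R+1\<rceil>" if "R \<ge> 3" for R :: real
  proof -
    have "of_int \<lceil>R+1\<rceil> \<le> R + 2" by linarith
    moreover have "0 \<le> \<lceil>R+1\<rceil>" using that by simp
    ultimately show "real (nat \<lceil>R+1\<rceil>) \<le> 2 * R" using that by simp
    show "1 \<le> nat \<lceil>R+1\<rceil>" using that by linarith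
  qed
  have powN: "R powr (real N - 1) = R^(N-1)" if "0 < R" for R :: real
    using that N1 by (simp add: powr_realpow[symmetric] of_nat_diff)
  have case_gt: "\<forall>R\<ge>R3. energy F W u R \<le> ennreal ((2^(N-1) * (C1 + C2 * (\<sigma>/(\<sigma>-1))) + 1) * R powr (real N - 1))"
    if sg: "1 < \<sigma>"
  proof (intro allI impI)
    fix R assume R: "R \<ge> R3"
    have R3': "R \<ge> 3" using R unfolding R3_def by simp
    define P where "P = R^(N-1)"
    have P0: "0 \<le> P" unfolding P_def using R3' by simp
    have Hb: "H R \<le> \<sigma>/(\<sigma>-1)" unfolding H_def by (rule harm_gt1[OF sg])
    have "C1 * (R+2)^(N-1) \<le> C1 * (2^(N-1) * P)" unfolding P_def using pw[OF R3'] C1 by (intro mult_left_mono) auto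
    moreover have "C2 * (R+1)^(N-1) * H R \<le> C2 * (2^(N-1) * P) * (\<sigma>/(\<sigma>-1))"
      unfolding P_def using pw[OF R3'] C2 Hb H0[of R] R3' by (intro mult_mono) auto
    moreover have "C1 * (2^(N-1) * P) + C2 * (2^(N-1) * P) * (\<sigma>/(\<sigma>-1)) = 2^(N-1) * (C1 + C2 * (\<sigma>/(\<sigma>-1))) * P"
      by (simp add: algebra_simps)
    ultimately have "C1 * (R+2)^(N-1) + C2 * (R+1)^(N-1) * H R \<le> (2^(N-1) * (C1 + C2 * (\<sigma>/(\<sigma>-1))) + 1) * P"
      using P0 by (simp add: algebra_simps)
    then have "C1 * (R+2)^(N-1) + C2 * (R+1)^(N-1) * H R \<le> (2^(N-1) * (C1 + C2 * (\<sigma>/(\<sigma>-1))) + 1) * R powr (real N - 1)"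
      unfolding P_def using powN[of R] R3' by simp
    then show "energy F W u R \<le> ennreal ((2^(N-1) * (C1 + C2 * (\<sigma>/(\<sigma>-1))) + 1) * R powr (real N - 1))"
      using key[OF R] by (meson ennreal_leI order_trans)
  qed
  have case_eq: "\<forall>R\<ge>R3. energy F W u R \<le> ennreal ((2^(N-1) * (C1 + 3 * C2) + 1) * (R powr (real N - 1) * ln R))"
    if sg: "\<sigma> = 1"
  proof (intro allI impI)
    fix R assume R: "R \<ge> R3"
    have R3': "R \<ge> 3" using R unfolding R3_def by simp
    define P where "P = R^(N-1)"
    have P0: "0 \<le> P" unfolding P_def using R3' by simp
    have lnR: "1 \<le> ln R" using R3' ln_ge_iff[of R 1] exp_le by auto
    have "H R \<le> 1 + ln (real (nat \<lceil>R+1\<rceil>))" unfolding H_def sg by (rule harm_eq1[OF Jb(2)[OF R3']])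
    also have "ln (real (nat \<lceil>R+1\<rceil>)) \<le> ln (2 * R)" using Jb[OF R3'] by (intro ln_mono) auto
    also have "ln (2 * R) = ln 2 + ln R" using R3' by (simp add: ln_mult)
    also have "ln 2 \<le> ln R" using R3' by (intro ln_mono) auto
    finally have Hb: "H R \<le> 3 * ln R" using lnR by linarith
    have "C1 * (R+2)^(N-1) \<le> C1 * (2^(N-1) * P)" unfolding P_def using pw[OF R3'] C1 by (intro mult_left_mono) auto
    also have "\<dots> \<le> C1 * (2^(N-1) * P) * ln R" using mult_left_mono[OF lnR, of "C1 * (2^(N-1) * P)"] C1 P0 by simp
    finally have a1: "C1 * (R+2)^(N-1) \<le> C1 * (2^(N-1) * P) * ln R" .
    have a2: "C2 * (R+1)^(N-1) * H R \<le> C2 * (2^(N-1) * P) * (3 * ln R)"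
      unfolding P_def using pw[OF R3'] C2 Hb H0[of R] R3' by (intro mult_mono) auto
    have "C1 * (2^(N-1) * P) * ln R + C2 * (2^(N-1) * P) * (3 * ln R) = 2^(N-1) * (C1 + 3 * C2) * (P * ln R)"
      by (simp add: algebra_simps)
    moreover have "0 \<le> P * ln R" using P0 lnR by simp
    ultimately have "C1 * (R+2)^(N-1) + C2 * (R+1)^(N-1) * H R \<le> (2^(N-1) * (C1 + 3 * C2) + 1) * (P * ln R)"
      using a1 a2 by (simp add: algebra_simps)
    then have "C1 * (R+2)^(N-1) + C2 * (R+1)^(N-1) * H R \<le> (2^(N-1) * (C1 + 3 * C2) + 1) * (R powr (real N - 1) * ln R)"
      unfolding P_def using powN[of R] R3' by simp
    then show "energy F W u R \<le> ennreal ((2^(N-1) * (C1 + 3 * C2) + 1) * (R powr (real N - 1) * ln R))"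
      using key[OF R] by (meson ennreal_leI order_trans)
  qed
  have case_lt: "\<forall>R\<ge>R3. energy F W u R \<le> ennreal ((2^(N-1) * (C1 + C2 * (2 powr (1-\<sigma>) / (1-\<sigma>))) + 1) * R powr (real N - \<sigma>))"
    if sg: "\<sigma> < 1"
  proof (intro allI impI)
    fix R assume R: "R \<ge> R3"
    have R3': "R \<ge> 3" using R unfolding R3_def by simp
    define P where "P = R^(N-1)"
    define Q where "Q = R powr (1 - \<sigma>)"
    have P0: "0 \<le> P" unfolding P_def using R3' by simp
    have Q1: "1 \<le> Q" unfolding Q_def using R3' sg by (simp add: ge_one_powr_ge_zero)
    have "H R \<le> real (nat \<lceil>R+1\<rceil>) powr (1-\<sigma>) / (1-\<sigma>)" unfolding H_def using harm_lt1[of \<sigma>] \<sigma>0 sg by simp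
    also have "\<dots> \<le> (2 * R) powr (1-\<sigma>) / (1-\<sigma>)" using Jb[OF R3'] sg by (intro divide_right_mono powr_mono2) auto
    also have "\<dots> = 2 powr (1-\<sigma>) / (1-\<sigma>) * Q" unfolding Q_def using R3' by (simp add: powr_mult)
    finally have Hb: "H R \<le> 2 powr (1-\<sigma>) / (1-\<sigma>) * Q" .
    have "C1 * (R+2)^(N-1) \<le> C1 * (2^(N-1) * P)" unfolding P_def using pw[OF R3'] C1 by (intro mult_left_mono) auto
    also have "\<dots> \<le> C1 * (2^(N-1) * P) * Q" using mult_left_mono[OF Q1, of "C1 * (2^(N-1) * P)"] C1 P0 by simp
    finally have a1: "C1 * (R+2)^(N-1) \<le> C1 * (2^(N-1) * P) * Q" .
    have a2: "C2 * (R+1)^(N-1) * H R \<le> C2 * (2^(N-1) * P) * (2 powr (1-\<sigma>) / (1-\<sigma>) * Q)"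
      unfolding P_def using pw[OF R3'] C2 Hb H0[of R] R3' by (intro mult_mono) auto
    have "C1 * (2^(N-1) * P) * Q + C2 * (2^(N-1) * P) * (2 powr (1-\<sigma>) / (1-\<sigma>) * Q) = 2^(N-1) * (C1 + C2 * (2 powr (1-\<sigma>) / (1-\<sigma>))) * (P * Q)"
      by (simp add: algebra_simps)
    moreover have "0 \<le> P * Q" using P0 Q1 by simp
    ultimately have "C1 * (R+2)^(N-1) + C2 * (R+1)^(N-1) * H R \<le> (2^(N-1) * (C1 + C2 * (2 powr (1-\<sigma>) / (1-\<sigma>))) + 1) * (P * Q)"
      using a1 a2 by (simp add: algebra_simps)
    moreover have "P * Q = R powr (real N - \<sigma>)"
    proof -
      have "P * Q = R powr (real N - 1) * R powr (1 - \<sigma>)" unfolding P_def Q_def using powN[of R] R3' by simp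
      also have "\<dots> = R powr (real N - \<sigma>)" by (simp add: powr_add[symmetric])
      finally show ?thesis .
    qed
    ultimately have "C1 * (R+2)^(N-1) + C2 * (R+1)^(N-1) * H R \<le> (2^(N-1) * (C1 + C2 * (2 powr (1-\<sigma>) / (1-\<sigma>))) + 1) * R powr (real N - \<sigma>)"
      by simp
    then show "energy F W u R \<le> ennreal ((2^(N-1) * (C1 + C2 * (2 powr (1-\<sigma>) / (1-\<sigma>))) + 1) * R powr (real N - \<sigma>))"
      using key[OF R] by (meson ennreal_leI order_trans)
  qed
  have cpos1: "0 < 2^(N-1) * (C1 + C2 * (\<sigma>/(\<sigma>-1))) + (1::real)" if "1 < \<sigma>"
    using that C1 C2 by (simp add: add_nonneg_pos)
  have cpos2: "0 < 2^(N-1) * (C1 + 3 * C2) + (1::real)" using C1 C2 by (simp add: add_nonneg_pos)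
  have cpos3: "0 < 2^(N-1) * (C1 + C2 * (2 powr (1-\<sigma>) / (1-\<sigma>))) + (1::real)" if "\<sigma> < 1"
    using that C1 C2 by (simp add: add_nonneg_pos)
  have iff1: "s \<in> {1/p<..<1} \<longleftrightarrow> 1 < \<sigma>" unfolding \<sigma>_def using s p by (auto simp: field_simps)
  have iff2: "s = 1/p \<longleftrightarrow> \<sigma> = 1" unfolding \<sigma>_def using s p by (auto simp: field_simps)
  have iff3: "s \<in> {0<..<1/p} \<longleftrightarrow> \<sigma> < 1" unfolding \<sigma>_def using s p by (auto simp: field_simps)
  have lim: "((\<lambda>R. energy F W u R / ennreal (R ^ CARD('n))) \<longlongrightarrow> 0) at_top"
  proof -
    have ev_pos: "eventually (\<lambda>R::real. 0 < R) at_top" by (rule eventually_gt_at_top)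
    consider (gt) "1 < \<sigma>" | (eq) "\<sigma> = 1" | (lt) "\<sigma> < 1" by linarith
    then show ?thesis
    proof cases
      case gt
      have "((\<lambda>R. R powr (real N - 1) / R^N) \<longlongrightarrow> 0) at_top"
      proof (rule tendsto_cong[THEN iffD1, OF _ tendsto_inverse_0_at_top[OF filterlim_ident]])
        show "\<forall>\<^sub>F R in at_top. inverse R = R powr (real N - 1) / R ^ N"
          using ev_pos
        proof eventually_elim
          case (elim R)
          then show ?case using powN[of R] N1 by (cases N) (auto simp: field_simps)
        qed
      qed
      then show ?thesis unfolding N_def
        using lim_aux[OF case_gt[OF gt], of "CARD('n)"] cpos1[OF gt] unfolding R3_def N_def by auto
    next
      case eq
      have "((\<lambda>R. R powr (real N - 1) * ln R / R^N) \<longlongrightarrow> 0) at_top"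
      proof (rule tendsto_cong[THEN iffD1, OF _ ln_x_over_x_tendsto_0])
        show "\<forall>\<^sub>F R in at_top. ln R / R = R powr (real N - 1) * ln R / R ^ N"
          using ev_pos
        proof eventually_elim
          case (elim R)
          then show ?case using powN[of R] N1 by (cases N) (auto simp: field_simps)
        qed
      qed
      moreover have "\<forall>R\<ge>R3. 0 \<le> R powr (real N - 1) * ln R" unfolding R3_def by auto
      ultimately show ?thesis unfolding N_def
        using lim_aux[OF case_eq[OF eq], of "CARD('n)"] cpos2 unfolding R3_def N_def by auto
    next
      case lt
      have "((\<lambda>R. R powr (real N - \<sigma>) / R^N) \<longlongrightarrow> 0) at_top"
      proof (rule tendsto_cong[THEN iffD1, OF _ tendsto_neg_powr[OF _ filterlim_ident]])
        show "- \<sigma> < 0" using \<sigma>0 by simp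
        show "\<forall>\<^sub>F R in at_top. R powr (- \<sigma>) = R powr (real N - \<sigma>) / R ^ N"
          using ev_pos
        proof eventually_elim
          case (elim R)
          then have "R ^ N = R powr (real N)" by (simp add: powr_realpow)
          then show ?case using elim by (simp add: powr_diff[symmetric])
        qed
      qed
      then show ?thesis unfolding N_def
        using lim_aux[OF case_lt[OF lt], of "CARD('n)"] cpos3[OF lt] unfolding R3_def N_def by auto
    qed
  qed
  show ?thesis
  proof (intro conjI impI)
    show "((\<lambda>R. energy F W u R / ennreal (R ^ CARD('n))) \<longlongrightarrow> 0) at_top" by (rule lim)
  next
    assume "s \<in> {1/p<..<1}"
    then have g: "1 < \<sigma>" using iff1 by simp
    show "\<exists>C>0. \<exists>R1. \<forall>R \<ge> R1. energy F W u R \<le> ennreal (C * R powr (real CARD('n) - 1))"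
      using case_gt[OF g] cpos1[OF g] unfolding N_def by blast
  next
    assume "s = 1/p"
    then have g: "\<sigma> = 1" using iff2 by simp
    show "\<exists>C>0. \<exists>R1. \<forall>R \<ge> R1. energy F W u R \<le> ennreal (C * R powr (real CARD('n) - 1) * ln R)"
      using case_eq[OF g] cpos2 unfolding N_def by (metis mult.assoc)
  next
    assume "s \<in> {0<..<1/p}"
    then have g: "\<sigma> < 1" using iff3 by simp
    show "\<exists>C>0. \<exists>R1. \<forall>R \<ge> R1. energy F W u R \<le> ennreal (C * R powr (real CARD('n) - s * p))"
      using case_lt[OF g] cpos3[OF g] unfolding N_def \<sigma>_def by blast
  qed
qed


end
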